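(* Under the setting below, assume $G$ is convex, the sampling is essentially cyclic with period $T\ge1$ (every $i\in[N]$ belongs to at least one of $I^{k+1},\dots,I^{k+T}$ for every $k\ge0$), and each $f_i$ is $\mu_{f_i}$-strongly convex ($\mu_{f_i}>0$). Let $\delta:=\min_{i}\frac{\gamma_i\mu_{f_i}}{N}$, $\Delta:=\max_i\frac{\gamma_iL_{f_i}}{N}$, $\bm x^\star$ the unique minimizer of $\Phi$, $\mu_F:=\frac1N\operatorname{blockdiag}(\mu_{f_1}I_{n_1},\dots,\mu_{f_N}I_{n_N})$ and $c:=\frac{\delta(1-\Delta)}{N(1+T(1-\delta))^2(1-\delta)}$. Then for all $\nu\in\mathbb N$: $\Phi^{\mathrm{FB}}_\Gamma(\bm x^{T(\nu+1)})-\min\Phi\le(1-c)(\Phi^{\mathrm{FB}}_\Gamma(\bm x^{T\nu})-\min\Phi)$, $\Phi(\bm z^{T\nu})-\min\Phi\le(\Phi(\bm x^0)-\min\Phi)(1-c)^\nu$, $\frac12\|\bm z^{T\nu}-\bm x^\star\|^2_{\mu_F}\le(\Phi(\bm x^0)-\min\Phi)(1-c)^\nu$. If the sampling is shuffled cyclic, i.e. $I^{k+1}=\{\pi_{\lfloor k/N\rfloor}(\mathrm{mod}(k,N)+1)\}$ for permutations $\pi_0,\pi_1,\dots$ of $[N]$ (which includes the cyclic rule $I^{k+1}=\{\mathrm{mod}(k,N)+1\}$), then the same three inequalities hold with $T$ replaced by $N$ and with $c:=\frac{\delta(1-\Delta)}{N(2-\delta)^2(1-\delta)}$.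
   Context: Setting: $N\ge1$, $n=\sum_{i=1}^N n_i$, $\bm x=(x_1,\dots,x_N)$ with $x_i\in\mathbb R^{n_i}$; $\Phi=F+G$ with $F(\bm x)=\frac1N\sum_i f_i(x_i)$, each $f_i:\mathbb R^{n_i}\to\mathbb R$ differentiable with $L_{f_i}$-Lipschitz gradient, $G:\mathbb R^n\to\mathbb R\cup\{+\infty\}$ proper lsc, $\arg\min\Phi\ne\emptyset$. $\gamma_i\in(0,N/L_{f_i})$, $\Gamma=\operatorname{blockdiag}(\gamma_1I_{n_1},\dots,\gamma_NI_{n_N})$, $\|x\|_V^2=\langle x,Vx\rangle$, $\operatorname{prox}_G^{V}(u)=\arg\min_w\{G(w)+\frac12\|w-u\|_V^2\}$, $\mathbf T(\bm x)=\operatorname{prox}_G^{\Gamma^{-1}}(\bm x-\Gamma\nabla F(\bm x))$. Forward-backward envelope: $\Phi^{\mathrm{FB}}_\Gamma(\bm x):=\inf_{\bm w}\{F(\bm x)+\langle\nabla F(\bm x),\bm w-\bm x\rangle+G(\bm w)+\frac12\|\bm w-\bm x\|^2_{\Gamma^{-1}}\}$. Algorithm BC: given $\bm x^0\in\mathbb R^n$, for $k=0,1,\dots$: pick $\bm z^k\in\mathbf T(\bm x^k)$; select $I^{k+1}\subseteq[N]$; set $x_i^{k+1}=z_i^k$ for $i\in I^{k+1}$ and $x_i^{k+1}=x_i^k$ otherwise. *)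

theory Defs
  imports "HOL-Analysis.Analysis"
begin

text \<open>The ambient space R^n is real^'n; its coordinates are partitioned into the
blocks 1..N by the map blk :: 'n => nat (coordinate j belongs to block blk j).\<close>

definition blkproj :: "('n::finite \<Rightarrow> nat) \<Rightarrow> nat \<Rightarrow> real^'n \<Rightarrow> real^'n" where
  "blkproj blk i x = (\<chi> j. if blk j = i then x $ j else 0)"

definition wnormsq :: "('n::finite \<Rightarrow> real) \<Rightarrow> real^'n \<Rightarrow> real" where
  "wnormsq w v = (\<Sum>j\<in>UNIV. w j * (v $ j)^2)"

definition Fsum :: "nat \<Rightarrow> (nat \<Rightarrow> real^'n::finite \<Rightarrow> real) \<Rightarrow> real^'n \<Rightarrow> real" where
  "Fsum N f x = (1 / real N) * (\<Sum>i\<in>{1..N}. f i x)"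

definition gradF :: "nat \<Rightarrow> (nat \<Rightarrow> real^'n::finite \<Rightarrow> real^'n) \<Rightarrow> real^'n \<Rightarrow> real^'n" where
  "gradF N df x = (1 / real N) *\<^sub>R (\<Sum>i\<in>{1..N}. df i x)"

text \<open>G : R^n -> R u {+oo} is encoded by its effective domain domG and its (real)
values on domG; G = +oo outside domG.\<close>
definition lsc_dom :: "(real^'n::finite) set \<Rightarrow> (real^'n \<Rightarrow> real) \<Rightarrow> bool" where
  "lsc_dom D G \<longleftrightarrow> closed {(x, t). x \<in> D \<and> G x \<le> t}"

definition proxset :: "(real^'n::finite) set \<Rightarrow> (real^'n \<Rightarrow> real) \<Rightarrow> ('n \<Rightarrow> real) \<Rightarrow> real^'n \<Rightarrow> (real^'n) set" where
  "proxset D G v u = {w \<in> D. \<forall>y\<in>D. G w + 1/2 * wnormsq v (w - u) \<le> G y + 1/2 * wnormsq v (y - u)}"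

definition Tmap :: "nat \<Rightarrow> ('n::finite \<Rightarrow> nat) \<Rightarrow> (nat \<Rightarrow> real) \<Rightarrow> (nat \<Rightarrow> real^'n \<Rightarrow> real^'n)
    \<Rightarrow> (real^'n) set \<Rightarrow> (real^'n \<Rightarrow> real) \<Rightarrow> real^'n \<Rightarrow> (real^'n) set" where
  "Tmap N blk \<gamma> df D G x =
     proxset D G (\<lambda>j. 1 / \<gamma> (blk j)) (x - (\<chi> j. \<gamma> (blk j) * gradF N df x $ j))"

text \<open>Forward-backward envelope (infimum over w; w outside domG gives +oo).\<close>
definition FBE :: "nat \<Rightarrow> ('n::finite \<Rightarrow> nat) \<Rightarrow> (nat \<Rightarrow> real) \<Rightarrow> (nat \<Rightarrow> real^'n \<Rightarrow> real)
    \<Rightarrow> (nat \<Rightarrow> real^'n \<Rightarrow> real^'n) \<Rightarrow> (real^'n) set \<Rightarrow> (real^'n \<Rightarrow> real) \<Rightarrow> real^'n \<Rightarrow> real" where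
  "FBE N blk \<gamma> f df D G x =
     Inf ((\<lambda>w. Fsum N f x + inner (gradF N df x) (w - x) + G w
               + 1/2 * wnormsq (\<lambda>j. 1 / \<gamma> (blk j)) (w - x)) ` D)"

definition ess_cyclic :: "nat \<Rightarrow> (nat \<Rightarrow> nat set) \<Rightarrow> nat \<Rightarrow> bool" where
  "ess_cyclic N I T \<longleftrightarrow> (\<forall>k. \<forall>i\<in>{1..N}. \<exists>t\<in>{1..T}. i \<in> I (k + t))"

definition shuffled_cyclic :: "nat \<Rightarrow> (nat \<Rightarrow> nat set) \<Rightarrow> bool" where
  "shuffled_cyclic N I \<longleftrightarrow> (\<exists>\<pi>::nat \<Rightarrow> nat \<Rightarrow> nat.
      (\<forall>m. \<pi> m permutes {1..N}) \<and> (\<forall>k. I (Suc k) = {\<pi> (k div N) (k mod N + 1)}))"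

end

theory Submission
  imports Defs
begin


definition Dnv :: "('n::finite \<Rightarrow> nat) \<Rightarrow> (nat \<Rightarrow> real) \<Rightarrow> real^'n \<Rightarrow> real^'n" where
  "Dnv blk \<gamma> v = (\<chi> j. v$j / sqrt (\<gamma> (blk j)))"

locale BC =
  fixes N :: nat
    and blk :: "'n::finite \<Rightarrow> nat"
    and f :: "nat \<Rightarrow> real^'n \<Rightarrow> real" and df :: "nat \<Rightarrow> real^'n \<Rightarrow> real^'n"
    and L \<mu> \<gamma> :: "nat \<Rightarrow> real"
    and domG :: "(real^'n) set" and G :: "real^'n \<Rightarrow> real"
    and xs :: "real^'n"
  assumes N: "N \<ge> 1"
    and blk_range: "\<forall>j. blk j \<in> {1..N}"
    and blk_nonempty: "\<forall>i\<in>{1..N}. \<exists>j. blk j = i"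
    and f_block: "\<forall>i\<in>{1..N}. \<forall>u v. blkproj blk i u = blkproj blk i v \<longrightarrow> f i u = f i v"
    and f_diff: "\<forall>i\<in>{1..N}. \<forall>u. (f i has_derivative (\<lambda>h. inner (df i u) h)) (at u)"
    and L_pos: "\<forall>i\<in>{1..N}. L i > 0"
    and f_lip: "\<forall>i\<in>{1..N}. \<forall>u v. norm (df i u - df i v) \<le> L i * norm (blkproj blk i (u - v))"
    and \<gamma>_range: "\<forall>i\<in>{1..N}. 0 < \<gamma> i \<and> \<gamma> i < real N / L i"
    and \<mu>_pos: "\<forall>i\<in>{1..N}. \<mu> i > 0"
    and f_strong: "\<forall>i\<in>{1..N}. convex_on UNIV (\<lambda>u. f i u - \<mu> i / 2 * (norm (blkproj blk i u))^2)"
    and G_convex: "convex domG" "convex_on domG G"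
    and xs_min: "xs \<in> domG" "\<forall>y\<in>domG. Fsum N f xs + G xs \<le> Fsum N f y + G y"
begin

abbreviation P where "P i \<equiv> blkproj blk i"

lemma P_nth[simp]: "P i u $ j = (if blk j = i then u$j else 0)"
  by (simp add: blkproj_def)

lemma P_diff: "P i (u - v) = P i u - P i v"
  by (simp add: vec_eq_iff)

lemma P_add: "P i (u + v) = P i u + P i v"
  by (simp add: vec_eq_iff)

lemma P_scale: "P i (c *\<^sub>R u) = c *\<^sub>R P i u"
  by (simp add: vec_eq_iff)

lemma P_neg: "P i (- u) = - P i u"
  by (simp add: vec_eq_iff)

lemma norm_sq_vec: "(norm (v::real^'n))^2 = (\<Sum>j\<in>UNIV. (v$j)^2)"
  by (subst power2_norm_eq_inner) (simp add: inner_vec_def power2_eq_square)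

lemma norm_P_sq: "(norm (P i v))^2 = (\<Sum>j\<in>UNIV. if blk j = i then (v$j)^2 else 0)"
  unfolding norm_sq_vec by (rule sum.cong) auto

lemma block_sum: "(\<Sum>i\<in>{1..N}. h i * (norm (P i v))^2) = (\<Sum>j\<in>UNIV. h (blk j) * (v$j)^2)"
proof -
  have "(\<Sum>i\<in>{1..N}. h i * (norm (P i v))^2) = (\<Sum>i\<in>{1..N}. \<Sum>j\<in>UNIV. if blk j = i then h i * (v$j)^2 else 0)"
    unfolding norm_P_sq by (simp add: sum_distrib_left if_distrib cong: if_cong)
  also have "\<dots> = (\<Sum>j\<in>UNIV. \<Sum>i\<in>{1..N}. if blk j = i then h i * (v$j)^2 else 0)"
    by (rule sum.swap)
  also have "\<dots> = (\<Sum>j\<in>UNIV. h (blk j) * (v$j)^2)"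
  proof (rule sum.cong)
    fix j show "(\<Sum>i\<in>{1..N}. if blk j = i then h i * (v$j)^2 else 0) = h (blk j) * (v$j)^2"
      using blk_range by (simp add: sum.delta')
  qed simp
  finally show ?thesis .
qed

lemma inner_sum_vec: "inner (a::real^'n) b = (\<Sum>j\<in>UNIV. a$j * b$j)"
  by (simp add: inner_vec_def)

lemma line_deriv:
  assumes i: "i \<in> {1..N}"
  shows "((\<lambda>s. f i (u + s *\<^sub>R d)) has_real_derivative inner (df i (u + t *\<^sub>R d)) d) (at t)"
proof -
  have h1: "(f i has_derivative (\<lambda>h. inner (df i (u + t *\<^sub>R d)) h)) (at (u + t *\<^sub>R d))"
    using f_diff i by blast
  have h2: "((\<lambda>s. u + s *\<^sub>R d) has_derivative (\<lambda>s. s *\<^sub>R d)) (at t)"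
    by (auto intro!: derivative_eq_intros)
  have "((\<lambda>s. f i (u + s *\<^sub>R d)) has_derivative (\<lambda>s. inner (df i (u + t *\<^sub>R d)) (s *\<^sub>R d))) (at t)"
    using has_derivative_compose[OF h2 h1] by simp
  then show ?thesis
    by (rule has_derivative_imp_has_field_derivative) simp
qed

lemma df_supp:
  assumes i: "i \<in> {1..N}" and j: "blk j \<noteq> i"
  shows "df i u $ j = 0"
proof -
  let ?e = "axis j (1::real) :: real^'n"
  have c: "f i (u + s *\<^sub>R ?e) = f i u" for s
    using f_block i j by (auto simp: vec_eq_iff axis_def blkproj_def)
  have "((\<lambda>s. f i (u + s *\<^sub>R ?e)) has_real_derivative inner (df i (u + 0 *\<^sub>R ?e)) ?e) (at 0)"
    by (rule line_deriv[OF i])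
  then have "((\<lambda>s. f i u) has_real_derivative inner (df i u) ?e) (at 0)"
    by (simp add: c)
  moreover have "((\<lambda>s. f i u) has_real_derivative 0) (at 0)" by simp
  ultimately have "inner (df i u) ?e = 0" using DERIV_unique by blast
  then show ?thesis by (simp add: inner_axis)
qed

lemma supp_P: "i \<in> {1..N} \<Longrightarrow> P i (df i u) = df i u"
  using df_supp by (auto simp: vec_eq_iff)

lemma inner_P: "(\<forall>j. blk j \<noteq> i \<longrightarrow> a$j = 0) \<Longrightarrow> inner a v = inner a (P i v)"
  unfolding inner_sum_vec by (rule sum.cong) auto

lemma inner_df_P: "i \<in> {1..N} \<Longrightarrow> inner (df i u - df i w) v = inner (df i u - df i w) (P i v)"
  by (rule inner_P) (simp add: df_supp)

lemma inner_df_P1: "i \<in> {1..N} \<Longrightarrow> inner (df i u) v = inner (df i u) (P i v)"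
  by (rule inner_P) (simp add: df_supp)

lemma df_blk: "i \<in> {1..N} \<Longrightarrow> P i u = P i v \<Longrightarrow> df i u = df i v"
  using f_lip by (metis P_diff diff_self norm_zero mult_zero_right norm_le_zero_iff eq_iff_diff_eq_0)

lemma f_blk: "i \<in> {1..N} \<Longrightarrow> P i u = P i v \<Longrightarrow> f i u = f i v"
  using f_block by blast

lemma i_facts:
  assumes i: "i \<in> {1..N}"
  shows "0 < \<gamma> i" "0 < L i" "0 < \<mu> i" "\<gamma> i * L i < real N" "real N > 0"
proof -
  show "0 < \<gamma> i" "0 < L i" "0 < \<mu> i" using i \<gamma>_range L_pos \<mu>_pos by auto
  show "real N > 0" using N by simp
  have "\<gamma> i < real N / L i" using i \<gamma>_range by auto
  then show "\<gamma> i * L i < real N" using \<open>0 < L i\<close> by (simp add: field_simps)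
qed

lemma norm_P_scale: "norm (P i (s *\<^sub>R d)) = \<bar>s\<bar> * norm (P i d)"
  by (simp add: P_scale)

lemma descent:
  assumes i: "i \<in> {1..N}"
  shows "f i y \<le> f i x + inner (df i x) (y - x) + L i / 2 * (norm (P i (y - x)))^2"
proof -
  define d where "d = y - x"
  define n2 where "n2 = (norm (P i d))^2"
  define \<phi> where "\<phi> s = f i (x + s *\<^sub>R d) - s * inner (df i x) d - L i / 2 * s^2 * n2" for s
  have "\<phi> 1 \<le> \<phi> 0"
  proof (rule DERIV_nonpos_imp_nonincreasing[of 0 1 \<phi>])
    fix s :: real assume s: "0 \<le> s" "s \<le> 1"
    have D: "(\<phi> has_real_derivative (inner (df i (x + s *\<^sub>R d)) d - inner (df i x) d - L i / 2 * (2 * s) * n2)) (at s)"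
      unfolding \<phi>_def
      by (rule derivative_eq_intros line_deriv[OF i] refl | simp)+
    have "inner (df i (x + s *\<^sub>R d)) d - inner (df i x) d = inner (df i (x + s *\<^sub>R d) - df i x) (P i d)"
      using inner_df_P[OF i] by (simp add: inner_diff_left)
    also have "\<dots> \<le> norm (df i (x + s *\<^sub>R d) - df i x) * norm (P i d)"
      by (rule norm_cauchy_schwarz)
    also have "\<dots> \<le> (L i * norm (P i ((x + s *\<^sub>R d) - x))) * norm (P i d)"
      apply (rule mult_right_mono) using f_lip i apply blast by simp
    also have "\<dots> = L i * s * n2"
      using s by (simp add: norm_P_scale n2_def power2_eq_square)
    finally show "\<exists>y. (\<phi> has_real_derivative y) (at s) \<and> y \<le> 0"
      using D by (intro exI[of _ "inner (df i (x + s *\<^sub>R d)) d - inner (df i x) d - L i / 2 * (2 * s) * n2"]) auto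
  qed simp
  then show ?thesis by (simp add: \<phi>_def d_def n2_def)
qed

lemma strong:
  assumes i: "i \<in> {1..N}"
  shows "f i y \<ge> f i x + inner (df i x) (y - x) + \<mu> i / 2 * (norm (P i (y - x)))^2"
proof -
  define d where "d = y - x"
  define A where "A = (norm (P i x))^2"
  define B where "B = inner (P i x) (P i d)"
  define C where "C = (norm (P i d))^2"
  define h where "h w = f i w - \<mu> i / 2 * (norm (P i w))^2" for w
  define g where "g s = f i (x + s *\<^sub>R d) - \<mu> i / 2 * (A + 2 * s * B + s^2 * C)" for s
  have hconv: "convex_on UNIV h" using f_strong i unfolding h_def by blast
  have ge: "g s = h (x + s *\<^sub>R d)" for s
  proof -
    have "(norm (P i (x + s *\<^sub>R d)))^2 = A + 2 * s * B + s^2 * C"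
      unfolding A_def B_def C_def P_add P_scale power2_norm_eq_inner
      by (simp add: inner_add_left inner_add_right inner_commute power2_eq_square algebra_simps)
    then show ?thesis by (simp add: g_def h_def)
  qed
  have gconv: "convex_on UNIV g"
    unfolding convex_on_def
  proof (intro conjI ballI allI impI)
    fix a b u v :: real assume uv: "u \<ge> 0" "v \<ge> 0" "u + v = 1"
    have e: "x + (u *\<^sub>R a + v *\<^sub>R b) *\<^sub>R d = u *\<^sub>R (x + a *\<^sub>R d) + v *\<^sub>R (x + b *\<^sub>R d)"
    proof -
      have "x = u *\<^sub>R x + v *\<^sub>R x" using uv by (metis scaleR_add_left scaleR_one)
      then show ?thesis by (simp add: algebra_simps)
    qed
    show "g (u *\<^sub>R a + v *\<^sub>R b) \<le> u * g a + v * g b"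
      unfolding ge e using hconv uv unfolding convex_on_def by auto
  qed simp
  have D: "(g has_real_derivative (inner (df i (x + 0 *\<^sub>R d)) d - \<mu> i / 2 * (2 * B + 2 * 0 * C))) (at 0)"
    unfolding g_def
    by (rule derivative_eq_intros line_deriv[OF i] refl | simp)+
  have "g 1 - g 0 \<ge> (inner (df i x) d - \<mu> i * B) * (1 - 0)"
    by (rule convex_on_imp_above_tangent[OF gconv]) (use D in auto)
  then show ?thesis by (simp add: g_def d_def C_def algebra_simps)
qed

lemma mu_le_L:
  assumes i: "i \<in> {1..N}"
  shows "\<mu> i \<le> L i"
proof -
  obtain j where j: "blk j = i" using blk_nonempty i by blast
  define e where "e = (axis j (1::real) :: real^'n)"
  have Pe: "P i e = e" using j by (auto simp: vec_eq_iff e_def axis_def)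
  have ne: "norm e = 1" by (simp add: e_def)
  have "f i (0 + e) \<le> f i 0 + inner (df i 0) (0 + e - 0) + L i / 2 * (norm (P i (0 + e - 0)))^2"
    by (rule descent[OF i])
  moreover have "f i (0 + e) \<ge> f i 0 + inner (df i 0) (0 + e - 0) + \<mu> i / 2 * (norm (P i (0 + e - 0)))^2"
    by (rule strong[OF i])
  ultimately show ?thesis using Pe ne by simp
qed

lemma PP: "P i (P i v) = P i v"
  by (simp add: vec_eq_iff)

lemma inner_P_self: "inner (P i v) v = (norm (P i v))^2"
proof -
  have "inner (P i v) v = inner (P i v) (P i v)"
    by (rule inner_P) simp
  then show ?thesis by (simp add: power2_norm_eq_inner)
qed

lemma coco:
  fixes x y :: "real^'n" and s :: real
  assumes i: "i \<in> {1..N}"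
  defines "p \<equiv> P i (y - x)"
  defines "g \<equiv> df i y - df i x - \<mu> i *\<^sub>R p"
  shows "inner g p \<ge> (2 * s - (L i - \<mu> i) * s^2) * (norm g)^2"
proof -
  have Pg: "P i g = g" unfolding g_def p_def
    by (simp add: P_diff P_scale supp_P[OF i] PP)
  have gsupp: "inner g v = inner g (P i v)" for v
    using Pg by (metis inner_P P_nth)
  define w where "w = y - s *\<^sub>R g"
  define w' where "w' = x + s *\<^sub>R g"
  define a where "a = inner g p"
  define pp where "pp = (norm p)^2"
  define gg where "gg = (norm g)^2"
  have "w - x = (y - x) - s *\<^sub>R g" unfolding w_def by simp
  then have e1: "P i (w - x) = p - s *\<^sub>R g" unfolding p_def
    by (simp only: P_diff P_scale Pg)
  have e2: "P i (w - y) = - (s *\<^sub>R g)" unfolding w_def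
    by (simp add: P_scale Pg P_neg)
  have e3: "P i (w' - y) = - (p - s *\<^sub>R g)" unfolding w'_def p_def
    by (simp only: P_diff P_add P_scale Pg) (simp add: algebra_simps)
  have "w' - x = s *\<^sub>R g" unfolding w'_def by simp
  then have e4: "P i (w' - x) = s *\<^sub>R g"
    by (simp add: P_scale Pg)
  have n1: "(norm (p - s *\<^sub>R g))^2 = pp - 2 * s * a + s^2 * gg"
    unfolding pp_def gg_def a_def power2_norm_eq_inner
    by (simp add: inner_diff_left inner_diff_right inner_commute power2_eq_square algebra_simps)
  have n2: "(norm (s *\<^sub>R g))^2 = s^2 * gg" unfolding gg_def by (simp add: power_mult_distrib)
  have I1: "f i w \<ge> f i x + inner (df i x) (w - x) + \<mu> i / 2 * (norm (P i (w - x)))^2"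
    by (rule strong[OF i])
  have I2: "f i w \<le> f i y + inner (df i y) (w - y) + L i / 2 * (norm (P i (w - y)))^2"
    by (rule descent[OF i])
  have I3: "f i w' \<ge> f i y + inner (df i y) (w' - y) + \<mu> i / 2 * (norm (P i (w' - y)))^2"
    by (rule strong[OF i])
  have I4: "f i w' \<le> f i x + inner (df i x) (w' - x) + L i / 2 * (norm (P i (w' - x)))^2"
    by (rule descent[OF i])
  define A1 where "A1 = inner (df i x) (y - x)"
  define A2 where "A2 = inner (df i y) (y - x)"
  define B1 where "B1 = inner (df i x) g"
  define B2 where "B2 = inner (df i y) g"
  have q1: "inner (df i x) (w - x) = A1 - s * B1" unfolding A1_def B1_def w_def
    by (simp add: inner_diff_right algebra_simps)
  have q2: "inner (df i y) (w - y) = - s * B2" unfolding B2_def w_def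
    by (simp add: inner_diff_right algebra_simps)
  have q3: "inner (df i y) (w' - y) = - A2 + s * B2" unfolding A2_def B2_def w'_def
    by (simp add: inner_diff_right inner_add_right algebra_simps)
  have q4: "inner (df i x) (w' - x) = s * B1" unfolding B1_def w'_def
    by (simp add: algebra_simps)
  have r1: "A2 - A1 = a + \<mu> i * pp"
  proof -
    have "A2 - A1 = inner (df i y - df i x) (y - x)" unfolding A1_def A2_def by (simp add: inner_diff_left)
    also have "\<dots> = inner (df i y - df i x) p" unfolding p_def using inner_df_P[OF i] by blast
    also have "\<dots> = inner (g + \<mu> i *\<^sub>R p) p" unfolding g_def by simp
    also have "\<dots> = a + \<mu> i * pp" unfolding a_def pp_def
      by (simp add: inner_add_left power2_norm_eq_inner)
    finally show ?thesis .
  qed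
  have r2: "B2 - B1 = gg + \<mu> i * a"
  proof -
    have "B2 - B1 = inner (df i y - df i x) g" unfolding B1_def B2_def by (simp add: inner_diff_left)
    also have "\<dots> = inner (g + \<mu> i *\<^sub>R p) g" unfolding g_def by simp
    also have "\<dots> = gg + \<mu> i * a" unfolding a_def gg_def
      by (simp add: inner_add_left power2_norm_eq_inner inner_commute inner_add_right)
    finally show ?thesis .
  qed
  have r2s: "s * B2 - s * B1 = s * gg + s * \<mu> i * a"
    using r2 by (metis right_diff_distrib distrib_left mult.assoc)
  have n3: "(norm (- (p - s *\<^sub>R g)))^2 = pp - 2 * s * a + s^2 * gg" using n1 by (simp only: norm_minus_cancel)
  have n4: "(norm (- (s *\<^sub>R g)))^2 = s^2 * gg" using n2 by (simp only: norm_minus_cancel)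
  from I1 I2 I3 I4 have
    "A1 - s * B1 + \<mu> i / 2 * (pp - 2 * s * a + s^2 * gg) + (- A2 + s * B2) + \<mu> i / 2 * (pp - 2 * s * a + s^2 * gg)
     \<le> - s * B2 + L i / 2 * (s^2 * gg) + s * B1 + L i / 2 * (s^2 * gg)"
    unfolding e1 e2 e3 e4 q1 q2 q3 q4 n1 n2 n3 n4 by linarith
  then have "a \<ge> 2 * s * gg + (\<mu> i - L i) * s^2 * gg"
    using r1 r2s by (simp add: algebra_simps) 
  then show ?thesis unfolding a_def gg_def by (simp add: algebra_simps)
qed

lemma block_contr:
  fixes x y :: "real^'n"
  assumes i: "i \<in> {1..N}"
  defines "\<alpha> \<equiv> \<gamma> i / real N"
  shows "(norm (P i (y - x) - \<alpha> *\<^sub>R (df i y - df i x)))^2 \<le> (1 - \<alpha> * \<mu> i)^2 * (norm (P i (y - x)))^2"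
proof -
  note F = i_facts[OF i]
  have \<alpha>pos: "\<alpha> > 0" unfolding \<alpha>_def using F by simp
  have \<alpha>L: "\<alpha> * L i < 1" unfolding \<alpha>_def using F by (simp add: field_simps)
  have \<alpha>\<mu>: "\<alpha> * \<mu> i < 1" using \<alpha>L mu_le_L[OF i] \<alpha>pos
    by (meson le_less_trans mult_left_mono less_imp_le)
  define q where "q = 1 - \<alpha> * \<mu> i"
  have qpos: "q > 0" unfolding q_def using \<alpha>\<mu> by simp
  define M where "M = L i - \<mu> i"
  define s where "s = \<alpha> / q"
  define p where "p = P i (y - x)"
  define g where "g = df i y - df i x - \<mu> i *\<^sub>R p"
  define a where "a = inner g p"
  define pp where "pp = (norm p)^2"
  define gg where "gg = (norm g)^2"
  have co: "a \<ge> (2 * s - M * s^2) * gg"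
    unfolding a_def gg_def M_def g_def p_def by (rule coco[OF i])
  have K: "2 * \<alpha> * q * (2 * s - M * s^2) \<ge> \<alpha>^2"
  proof -
    have Ma: "M * \<alpha> < q" unfolding M_def q_def using \<alpha>L by (simp add: algebra_simps)
    have "2 * \<alpha> * q * (2 * s - M * s^2) = \<alpha>^2 * (4 - 2 * (M * \<alpha>) / q)"
      unfolding s_def using qpos by (simp add: field_simps power2_eq_square)
    moreover have "2 * (M * \<alpha>) / q \<le> 3" using Ma qpos by (simp add: field_simps)
    then have "4 - 2 * (M * \<alpha>) / q \<ge> 1" by linarith
    then have "\<alpha>^2 * (4 - 2 * (M * \<alpha>) / q) \<ge> \<alpha>^2 * 1" by (intro mult_left_mono) auto
    ultimately show ?thesis by simp
  qed
  have gg0: "gg \<ge> 0" unfolding gg_def by simp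
  have eqv: "P i (y - x) - \<alpha> *\<^sub>R (df i y - df i x) = q *\<^sub>R p - \<alpha> *\<^sub>R g"
    unfolding g_def q_def p_def by (simp add: algebra_simps)
  have "(norm (P i (y - x) - \<alpha> *\<^sub>R (df i y - df i x)))^2 = (norm (q *\<^sub>R p - \<alpha> *\<^sub>R g))^2"
    by (simp only: eqv)
  also have "\<dots> = q^2 * pp - 2 * \<alpha> * q * a + \<alpha>^2 * gg"
    unfolding pp_def gg_def a_def power2_norm_eq_inner
    by (simp add: inner_diff_left inner_diff_right inner_commute power2_eq_square algebra_simps)
  also have "\<dots> \<le> q^2 * pp"
  proof -
    have "2 * \<alpha> * q * a \<ge> 2 * \<alpha> * q * ((2 * s - M * s^2) * gg)"
      using co \<alpha>pos qpos by (intro mult_left_mono) auto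
    moreover have "2 * \<alpha> * q * ((2 * s - M * s^2) * gg) \<ge> \<alpha>^2 * gg"
      using K gg0 by (metis mult.assoc mult_right_mono)
    ultimately show ?thesis by linarith
  qed
  finally show ?thesis unfolding q_def pp_def p_def .
qed

abbreviation Dinv where "Dinv \<equiv> (\<lambda>j. 1 / \<gamma> (blk j))"
abbreviation gr where "gr \<equiv> gradF N df"
abbreviation uu where "uu x \<equiv> x - (\<chi> j. \<gamma> (blk j) * gr x $ j)"
abbreviation val where "val x w \<equiv> Fsum N f x + inner (gr x) (w - x) + G w + 1/2 * wnormsq Dinv (w - x)"
abbreviation \<Phi> where "\<Phi> u \<equiv> Fsum N f u + G u"
abbreviation TT where "TT x \<equiv> Tmap N blk \<gamma> df domG G x"
abbreviation FB where "FB x \<equiv> FBE N blk \<gamma> f df domG G x"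
abbreviation Dn where "Dn \<equiv> Dnv blk \<gamma>"

lemma blk_facts: "0 < \<gamma> (blk j)" "0 < L (blk j)" "0 < \<mu> (blk j)" "\<gamma> (blk j) * L (blk j) < real N"
  using i_facts[of "blk j"] blk_range by auto

lemma gr_nth: "gr x $ j = df (blk j) x $ j / real N"
proof -
  have "gr x $ j = (\<Sum>i\<in>{1..N}. df i x $ j) / real N"
    by (simp add: gradF_def)
  also have "(\<Sum>i\<in>{1..N}. df i x $ j) = (\<Sum>i\<in>{1..N}. if i = blk j then df (blk j) x $ j else 0)"
    by (rule sum.cong) (auto simp: df_supp)
  also have "\<dots> = df (blk j) x $ j" using blk_range by simp
  finally show ?thesis .
qed

lemma Fsum_sum: "Fsum N f x = (\<Sum>i\<in>{1..N}. f i x) / real N"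
  by (simp add: Fsum_def)

lemma inner_gr: "inner (gr x) v = (\<Sum>i\<in>{1..N}. inner (df i x) v) / real N"
  by (simp add: gradF_def inner_sum_left)

lemma F_descent:
  "Fsum N f y \<le> Fsum N f x + inner (gr x) (y - x) + 1/2 * wnormsq (\<lambda>j. L (blk j) / real N) (y - x)"
proof -
  have "(\<Sum>i\<in>{1..N}. f i y) \<le> (\<Sum>i\<in>{1..N}. f i x + inner (df i x) (y - x) + L i / 2 * (norm (P i (y - x)))^2)"
    by (rule sum_mono) (rule descent, simp)
  also have "\<dots> = (\<Sum>i\<in>{1..N}. f i x) + (\<Sum>i\<in>{1..N}. inner (df i x) (y - x)) + (\<Sum>j\<in>UNIV. L (blk j) / 2 * ((y - x)$j)^2)"
    by (simp only: sum.distrib block_sum)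
  finally have *: "(\<Sum>i\<in>{1..N}. f i y) \<le> \<dots>" .
  have NN: "real N > 0" using N by simp
  have w: "wnormsq (\<lambda>j. L (blk j) / real N) (y - x) = (\<Sum>j\<in>UNIV. L (blk j) / 2 * ((y - x)$j)^2) * 2 / real N"
    unfolding wnormsq_def by (simp add: sum_divide_distrib sum_distrib_right)
  show ?thesis unfolding Fsum_sum inner_gr w using * NN by (simp add: field_simps)
qed

lemma F_strong:
  "Fsum N f y \<ge> Fsum N f x + inner (gr x) (y - x) + 1/2 * wnormsq (\<lambda>j. \<mu> (blk j) / real N) (y - x)"
proof -
  have "(\<Sum>i\<in>{1..N}. f i y) \<ge> (\<Sum>i\<in>{1..N}. f i x + inner (df i x) (y - x) + \<mu> i / 2 * (norm (P i (y - x)))^2)"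
    by (rule sum_mono) (rule strong, simp)
  moreover have "(\<Sum>i\<in>{1..N}. f i x + inner (df i x) (y - x) + \<mu> i / 2 * (norm (P i (y - x)))^2) = (\<Sum>i\<in>{1..N}. f i x) + (\<Sum>i\<in>{1..N}. inner (df i x) (y - x)) + (\<Sum>j\<in>UNIV. \<mu> (blk j) / 2 * ((y - x)$j)^2)"
    by (simp only: sum.distrib block_sum)
  ultimately have *: "(\<Sum>i\<in>{1..N}. f i y) \<ge> (\<Sum>i\<in>{1..N}. f i x) + (\<Sum>i\<in>{1..N}. inner (df i x) (y - x)) + (\<Sum>j\<in>UNIV. \<mu> (blk j) / 2 * ((y - x)$j)^2)" by simp
  have NN: "real N > 0" using N by simp
  have w: "wnormsq (\<lambda>j. \<mu> (blk j) / real N) (y - x) = (\<Sum>j\<in>UNIV. \<mu> (blk j) / 2 * ((y - x)$j)^2) * 2 / real N"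
    unfolding wnormsq_def by (simp add: sum_divide_distrib sum_distrib_right)
  have "Fsum N f y - (Fsum N f x + inner (gr x) (y - x) + 1/2 * wnormsq (\<lambda>j. \<mu> (blk j) / real N) (y - x))
     = ((\<Sum>i\<in>{1..N}. f i y) - ((\<Sum>i\<in>{1..N}. f i x) + (\<Sum>i\<in>{1..N}. inner (df i x) (y - x)) + (\<Sum>j\<in>UNIV. \<mu> (blk j) / 2 * ((y - x)$j)^2))) / real N"
    unfolding Fsum_sum inner_gr w using NN by (simp add: field_simps)
  moreover have "((\<Sum>i\<in>{1..N}. f i y) - ((\<Sum>i\<in>{1..N}. f i x) + (\<Sum>i\<in>{1..N}. inner (df i x) (y - x)) + (\<Sum>j\<in>UNIV. \<mu> (blk j) / 2 * ((y - x)$j)^2))) / real N \<ge> 0"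
    using * NN by simp
  ultimately show ?thesis by linarith
qed

lemma val_expand:
  "val x w = G w + 1/2 * wnormsq Dinv (w - uu x) + (Fsum N f x - 1/2 * (\<Sum>j\<in>UNIV. \<gamma> (blk j) * (gr x $ j)^2))"
proof -
  have pt: "1 / \<gamma> (blk j) * ((w - uu x) $ j)^2 = 1 / \<gamma> (blk j) * ((w - x) $ j)^2 + 2 * (gr x $ j * (w - x) $ j) + \<gamma> (blk j) * (gr x $ j)^2" for j
  proof -
    have g: "\<gamma> (blk j) > 0" by (rule blk_facts)
    have "(w - uu x) $ j = (w - x) $ j + \<gamma> (blk j) * gr x $ j" by simp
    then show ?thesis using g by (simp add: field_simps power2_eq_square)
  qed
  have "wnormsq Dinv (w - uu x) = wnormsq Dinv (w - x) + 2 * inner (gr x) (w - x) + (\<Sum>j\<in>UNIV. \<gamma> (blk j) * (gr x $ j)^2)"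
    unfolding wnormsq_def inner_sum_vec pt by (simp add: sum.distrib sum_distrib_left)
  then show ?thesis by linarith
qed

lemma TT_min:
  assumes "z \<in> TT x"
  shows "z \<in> domG" "\<And>w. w \<in> domG \<Longrightarrow> val x z \<le> val x w"
proof -
  show "z \<in> domG" using assms by (simp add: Tmap_def proxset_def)
  fix w assume "w \<in> domG"
  then have "G z + 1/2 * wnormsq Dinv (z - uu x) \<le> G w + 1/2 * wnormsq Dinv (w - uu x)"
    using assms by (simp add: Tmap_def proxset_def)
  then show "val x z \<le> val x w" unfolding val_expand[of x z] val_expand[of x w] by simp
qed

lemma FB_eq:
  assumes "z \<in> TT x"
  shows "FB x = val x z"
  unfolding FBE_def
  by (rule cInf_eq_minimum) (use TT_min[OF assms] in auto)

lemma Dn_nth: "Dn v $ j = v $ j / sqrt (\<gamma> (blk j))" by (simp add: Dnv_def)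
lemma Dn_diff: "Dn (a - b) = Dn a - Dn b" by (simp add: Dnv_def vec_eq_iff diff_divide_distrib)
lemma Dn_add: "Dn (a + b) = Dn a + Dn b" by (simp add: Dnv_def vec_eq_iff add_divide_distrib)
lemma Dn_scale: "Dn (c *\<^sub>R a) = c *\<^sub>R Dn a" by (simp add: Dnv_def vec_eq_iff)
lemma Dn_neg: "Dn (- a) = - Dn a" by (simp add: Dnv_def vec_eq_iff)

lemma Dn_inner: "inner (Dn a) (Dn b) = (\<Sum>j\<in>UNIV. a$j * b$j / \<gamma> (blk j))"
proof -
  have "a $ j / sqrt (\<gamma> (blk j)) * (b $ j / sqrt (\<gamma> (blk j))) = a$j * b$j / \<gamma> (blk j)" for j
  proof -
    have "sqrt (\<gamma> (blk j)) * sqrt (\<gamma> (blk j)) = \<gamma> (blk j)" using blk_facts(1)[of j] by simp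
    then show ?thesis by (metis times_divide_times_eq)
  qed
  then show ?thesis by (simp only: inner_sum_vec Dn_nth)
qed

lemma Dn_norm: "(norm (Dn v))^2 = wnormsq Dinv v"
  unfolding power2_norm_eq_inner Dn_inner wnormsq_def
  by (rule sum.cong) (simp_all add: power2_eq_square)

lemma lim0:
  fixes a b c :: real
  assumes "\<And>t. 0 < t \<Longrightarrow> t \<le> 1 \<Longrightarrow> a \<le> b + t * c"
  shows "a \<le> b"
proof (rule ccontr)
  assume ab: "\<not> a \<le> b"
  show False
  proof (cases "c \<le> 0")
    case True then show False using assms[of 1] ab by simp
  next
    case False
    define t where "t = min 1 ((a - b) / (2 * c))"
    have t: "0 < t" "t \<le> 1" using ab False by (auto simp: t_def)
    have "t * c \<le> (a - b) / (2 * c) * c" using False by (intro mult_right_mono) (auto simp: t_def)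
    also have "\<dots> = (a - b) / 2" using False by simp
    finally show False using assms[OF t] ab by simp
  qed
qed

lemma prox_VI:
  assumes z: "z \<in> TT x" and y: "y \<in> domG"
  shows "G z \<le> G y + inner (Dn (z - uu x)) (Dn (y - z))"
proof -
  define u where "u = uu x"
  have zD: "z \<in> domG" using TT_min[OF z] by simp
  have min: "\<And>w. w \<in> domG \<Longrightarrow> G z + 1/2 * (norm (Dn (z - u)))^2 \<le> G w + 1/2 * (norm (Dn (w - u)))^2"
    using z unfolding Dn_norm u_def by (simp add: Tmap_def proxset_def)
  define A where "A = Dn (z - u)"
  define B where "B = Dn (y - z)"
  show ?thesis
  proof (rule lim0[where c = "(norm B)^2 / 2"])
    fix t :: real assume t: "0 < t" "t \<le> 1"
    define w where "w = (1 - t) *\<^sub>R z + t *\<^sub>R y"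
    have wD: "w \<in> domG" unfolding w_def using G_convex(1) zD y t
      by (intro convexD) auto
    have Gw: "G w \<le> (1 - t) * G z + t * G y"
      unfolding w_def using G_convex(2) zD y t by (intro convex_onD) auto
    have "w - u = (z - u) + t *\<^sub>R (y - z)" unfolding w_def by (simp add: algebra_simps)
    then have "Dn (w - u) = A + t *\<^sub>R B" unfolding A_def B_def by (simp only: Dn_add Dn_scale)
    then have nw: "(norm (Dn (w - u)))^2 = (norm A)^2 + 2 * t * inner A B + t^2 * (norm B)^2"
      unfolding power2_norm_eq_inner by (simp add: inner_add_left inner_add_right inner_commute power2_eq_square algebra_simps)
    have "G z + 1/2 * (norm A)^2 \<le> (1 - t) * G z + t * G y + 1/2 * ((norm A)^2 + 2 * t * inner A B + t^2 * (norm B)^2)"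
      using min[OF wD] Gw nw unfolding A_def by simp
    then have "t * G z \<le> t * (G y + inner A B + t * ((norm B)^2 / 2))"
      by (simp add: algebra_simps power2_eq_square)
    then have "G z \<le> G y + inner A B + t * ((norm B)^2 / 2)" using t by simp
    then show "G z \<le> G y + inner (Dn (z - uu x)) (Dn (y - z)) + t * ((norm B)^2 / 2)"
      unfolding A_def B_def u_def by simp
  qed
qed

lemma prox_nonexp:
  assumes z1: "z1 \<in> TT x1" and z2: "z2 \<in> TT x2"
  shows "(norm (Dn (z1 - z2)))^2 \<le> (norm (Dn (uu x1 - uu x2)))^2"
proof -
  have d1: "z1 \<in> domG" "z2 \<in> domG" using TT_min z1 z2 by auto
  have v1: "G z1 \<le> G z2 + inner (Dn (z1 - uu x1)) (Dn (z2 - z1))" by (rule prox_VI[OF z1 d1(2)])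
  have v2: "G z2 \<le> G z1 + inner (Dn (z2 - uu x2)) (Dn (z1 - z2))" by (rule prox_VI[OF z2 d1(1)])
  define e where "e = Dn (z1 - z2)"
  define h where "h = Dn (uu x1 - uu x2)"
  have q1: "z1 - uu x1 = (z1 - z2) - (uu x2 - z2) - (uu x1 - uu x2)" by (simp add: algebra_simps)
  have q2: "z2 - z1 = - (z1 - z2)" "z2 - uu x2 = - (uu x2 - z2)" by simp_all
  have "Dn (z1 - uu x1) = e - Dn (uu x2 - z2) - h" "Dn (z2 - z1) = - e" "Dn (z2 - uu x2) = - Dn (uu x2 - z2)" "Dn (z1 - z2) = e"
    unfolding e_def h_def by (subst q1, simp only: Dn_diff, subst q2, simp only: Dn_neg, subst q2, simp only: Dn_neg, simp)
  then have "0 \<le> inner (e - Dn (uu x2 - z2) - h) (- e) + inner (- Dn (uu x2 - z2)) e"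
    using v1 v2 by simp
  then have "inner e e \<le> inner h e"
    by (simp add: inner_add_left inner_diff_left inner_diff_right inner_commute inner_minus_right)
  also have "\<dots> \<le> norm h * norm e" by (rule norm_cauchy_schwarz)
  finally have "(norm e)^2 \<le> norm h * norm e" by (simp add: power2_norm_eq_inner)
  then have "norm e \<le> norm h"
    by (cases "norm e = 0") (auto simp: power2_eq_square)
  then show ?thesis unfolding e_def h_def by (simp add: power_mono)
qed

definition dl where "dl = Min ((\<lambda>i. \<gamma> i * \<mu> i / real N) ` {1..N})"
definition Dl where "Dl = Max ((\<lambda>i. \<gamma> i * L i / real N) ` {1..N})"

lemma dl_le: "i \<in> {1..N} \<Longrightarrow> dl \<le> \<gamma> i * \<mu> i / real N"
  unfolding dl_def by (rule Min_le) auto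

lemma Dl_ge: "i \<in> {1..N} \<Longrightarrow> \<gamma> i * L i / real N \<le> Dl"
  unfolding Dl_def by (rule Max_ge) auto

lemma ne1: "{1..N} \<noteq> {}" using N by auto

lemma dl_pos: "0 < dl"
proof -
  have "dl \<in> (\<lambda>i. \<gamma> i * \<mu> i / real N) ` {1..N}" unfolding dl_def using ne1 by (intro Min_in) auto
  then obtain i where i: "i \<in> {1..N}" "dl = \<gamma> i * \<mu> i / real N" by blast
  then show ?thesis using i_facts[OF i(1)] by simp
qed

lemma Dl_lt1: "Dl < 1"
proof -
  have "Dl \<in> (\<lambda>i. \<gamma> i * L i / real N) ` {1..N}" unfolding Dl_def using ne1 by (intro Max_in) auto
  then obtain i where i: "i \<in> {1..N}" "Dl = \<gamma> i * L i / real N" by blast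
  have "\<gamma> i * L i / real N < 1" using i_facts[OF i(1)] by (simp add: divide_less_eq)
  then show ?thesis using i(2) by linarith
qed

lemma dl_le_Dl: "dl \<le> Dl"
proof -
  have i: "1 \<in> {1..N}" using N by simp
  have "\<gamma> 1 * \<mu> 1 / real N \<le> \<gamma> 1 * L 1 / real N"
    using mu_le_L[OF i] i_facts[OF i] by (intro divide_right_mono mult_left_mono) auto
  then show ?thesis using dl_le[OF i] Dl_ge[OF i] by linarith
qed

lemma dl_lt1: "dl < 1" using dl_le_Dl Dl_lt1 by linarith

lemma norm_Dn_blocks: "(norm (Dn v))^2 = (\<Sum>i\<in>{1..N}. 1 / \<gamma> i * (norm (P i v))^2)"
  unfolding Dn_norm wnormsq_def block_sum by simp

lemma P_uu:
  assumes i: "i \<in> {1..N}"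
  shows "P i (uu x1 - uu x2) = P i (x1 - x2) - (\<gamma> i / real N) *\<^sub>R (df i x1 - df i x2)"
proof -
  have NN: "real N > 0" using N by simp
  show ?thesis
    unfolding vec_eq_iff
  proof (intro allI)
    fix j
    show "P i (uu x1 - uu x2) $ j = (P i (x1 - x2) - (\<gamma> i / real N) *\<^sub>R (df i x1 - df i x2)) $ j"
    proof (cases "blk j = i")
      case True then show ?thesis by (simp add: gr_nth algebra_simps diff_divide_distrib)
    next
      case False then show ?thesis using df_supp[OF i False] by simp
    qed
  qed
qed

lemma fwd_contr: "(norm (Dn (uu x1 - uu x2)))^2 \<le> (1 - dl)^2 * (norm (Dn (x1 - x2)))^2"
proof -
  have "(norm (Dn (uu x1 - uu x2)))^2 = (\<Sum>i\<in>{1..N}. 1 / \<gamma> i * (norm (P i (uu x1 - uu x2)))^2)"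
    by (rule norm_Dn_blocks)
  also have "\<dots> \<le> (\<Sum>i\<in>{1..N}. 1 / \<gamma> i * ((1 - dl)^2 * (norm (P i (x1 - x2)))^2))"
  proof (rule sum_mono)
    fix i assume i: "i \<in> {1..N}"
    note F = i_facts[OF i]
    define \<alpha> where "\<alpha> = \<gamma> i / real N"
    have a1: "\<alpha> * \<mu> i \<le> \<alpha> * L i" using mu_le_L[OF i] F unfolding \<alpha>_def by (intro mult_left_mono) auto
    have a2: "\<alpha> * L i < 1" unfolding \<alpha>_def using F by (simp add: field_simps)
    have a3: "dl \<le> \<alpha> * \<mu> i" using dl_le[OF i] unfolding \<alpha>_def by simp
    have "(1 - \<alpha> * \<mu> i)^2 \<le> (1 - dl)^2" using a1 a2 a3 by (intro power_mono) auto
    then have "(norm (P i (uu x1 - uu x2)))^2 \<le> (1 - dl)^2 * (norm (P i (x1 - x2)))^2"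
      using block_contr[OF i, of x1 x2] unfolding P_uu[OF i] \<alpha>_def
      by (meson mult_right_mono order_trans zero_le_power2)
    then show "1 / \<gamma> i * (norm (P i (uu x1 - uu x2)))^2 \<le> 1 / \<gamma> i * ((1 - dl)^2 * (norm (P i (x1 - x2)))^2)"
      using F by (intro mult_left_mono) auto
  qed
  also have "\<dots> = (1 - dl)^2 * (norm (Dn (x1 - x2)))^2"
    unfolding norm_Dn_blocks sum_distrib_left by (simp only: mult.left_commute)
  finally show ?thesis .
qed

lemma T_contr:
  assumes "z1 \<in> TT x1" "z2 \<in> TT x2"
  shows "(norm (Dn (z1 - z2)))^2 \<le> (1 - dl)^2 * (norm (Dn (x1 - x2)))^2"
  using prox_nonexp[OF assms] fwd_contr[of x1 x2] by linarith

lemma wn_diff: "wnormsq a v - wnormsq b v = wnormsq (\<lambda>j. a j - b j) v"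
  by (simp add: wnormsq_def sum_subtractf[symmetric] left_diff_distrib)

lemma FB_ge:
  assumes z: "z \<in> TT x"
  shows "\<Phi> z + 1/2 * wnormsq (\<lambda>j. 1 / \<gamma> (blk j) - L (blk j) / real N) (z - x) \<le> FB x"
  using F_descent[of z x] FB_eq[OF z] wn_diff[where a=Dinv and b="\<lambda>j. L (blk j) / real N" and v="z - x"] by simp

lemma wn_nonneg: "(\<And>j. a j \<ge> 0) \<Longrightarrow> wnormsq a v \<ge> 0"
  unfolding wnormsq_def by (intro sum_nonneg) simp

lemma FB_ge_Phi:
  assumes z: "z \<in> TT x"
  shows "\<Phi> z \<le> FB x"
proof -
  have "wnormsq (\<lambda>j. 1 / \<gamma> (blk j) - L (blk j) / real N) (z - x) \<ge> 0"
  proof (rule wn_nonneg)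
    fix j
    have "\<gamma> (blk j) * L (blk j) < real N" "0 < \<gamma> (blk j)" using blk_facts by auto
    then show "0 \<le> 1 / \<gamma> (blk j) - L (blk j) / real N" using N by (simp add: field_simps)
  qed
  then show ?thesis using FB_ge[OF z] by linarith
qed

lemma m_le: "z \<in> domG \<Longrightarrow> \<Phi> xs \<le> \<Phi> z"
  using xs_min by blast

lemma m_le_FB: "z \<in> TT x \<Longrightarrow> \<Phi> xs \<le> FB x"
  using FB_ge_Phi m_le TT_min by fastforce

lemma FB_le_Phi:
  assumes z: "z \<in> TT x" and x: "x \<in> domG"
  shows "FB x \<le> \<Phi> x"
  using FB_eq[OF z] TT_min(2)[OF z x] by (simp add: wnormsq_def)

lemma wn_scale: "wnormsq a (t *\<^sub>R v) = t^2 * wnormsq a v"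
  by (simp add: wnormsq_def sum_distrib_left power_mult_distrib algebra_simps)

lemma third:
  assumes z: "z \<in> domG"
  shows "1/2 * wnormsq (\<lambda>j. \<mu> (blk j) / real N) (z - xs) \<le> \<Phi> z - \<Phi> xs"
proof -
  define v where "v = z - xs"
  define C where "C = wnormsq (\<lambda>j. L (blk j) / real N) v"
  have "G xs \<le> G z + inner (gr xs) v"
  proof (rule lim0[where c = "C / 2"])
    fix t :: real assume t: "0 < t" "t \<le> 1"
    define w where "w = (1 - t) *\<^sub>R xs + t *\<^sub>R z"
    have wD: "w \<in> domG" unfolding w_def using G_convex(1) z xs_min(1) t
      by (intro convexD) auto
    have Gw: "G w \<le> (1 - t) * G xs + t * G z"
      unfolding w_def using G_convex(2) z xs_min(1) t by (intro convex_onD) auto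
    have wv: "w - xs = t *\<^sub>R v" unfolding w_def v_def by (simp add: algebra_simps)
    have Fw: "Fsum N f w \<le> Fsum N f xs + t * inner (gr xs) v + 1/2 * (t^2 * C)"
      using F_descent[of w xs] unfolding wv C_def wn_scale by simp
    have "\<Phi> xs \<le> \<Phi> w" using m_le[OF wD] .
    then have "t * G xs \<le> t * (G z + inner (gr xs) v + t * (C / 2))"
      using Fw Gw by (simp add: algebra_simps power2_eq_square)
    then show "G xs \<le> G z + inner (gr xs) v + t * (C / 2)" using t by simp
  qed
  moreover have "Fsum N f z \<ge> Fsum N f xs + inner (gr xs) v + 1/2 * wnormsq (\<lambda>j. \<mu> (blk j) / real N) v"
    using F_strong[where y=z and x=xs] unfolding v_def by simp
  ultimately show ?thesis unfolding v_def by linarith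
qed

lemma alg1: "(1 - a) / 2 * q = q / 2 - a / 2 * (q::real)"
  by (simp add: field_simps)

lemma err_pt:
  fixes a b d m e :: real
  assumes "d > 0" "e > 0" "m \<ge> e * d"
  shows "a * b * d - a^2 * d / 2 - m * b^2 / 2 \<le> (1 - e) / (2 * e) * a^2 * d"
proof -
  have eq: "(1 - e) / (2 * e) * a^2 * d - (a * b * d - a^2 * d / 2 - m * b^2 / 2)
      = d / (2 * e) * (a - e * b)^2 + (m - e * d) * b^2 / 2"
    using assms by (simp add: field_simps power2_eq_square)
  have "d / (2 * e) * (a - e * b)^2 \<ge> 0" using assms by simp
  moreover have "(m - e * d) * b^2 / 2 \<ge> 0" using assms by simp
  ultimately show ?thesis using eq by linarith
qed

lemma err_bound:
  assumes z: "z \<in> TT x"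
  shows "FB x - \<Phi> xs \<le> (1 - dl) / (2 * dl) * (norm (Dn (z - x)))^2"
proof -
  have fb: "FB x = val x z" by (rule FB_eq[OF z])
  have sc: "Fsum N f xs \<ge> Fsum N f x + inner (gr x) (xs - x) + 1/2 * wnormsq (\<lambda>j. \<mu> (blk j) / real N) (xs - x)"
    by (rule F_strong)
  have vi: "G z \<le> G xs + inner (Dn (z - uu x)) (Dn (xs - z))"
    by (rule prox_VI[OF z xs_min(1)])
  define R where "R j = (z-x)$j * (xs-x)$j * (1 / \<gamma> (blk j)) - ((z-x)$j)^2 * (1 / \<gamma> (blk j)) / 2
      - \<mu> (blk j) / real N * ((xs-x)$j)^2 / 2" for j
  have pt: "gr x $ j * (z - x) $ j - gr x $ j * (xs - x) $ j + (z - uu x) $ j * (xs - z) $ j / \<gamma> (blk j)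
      + 1/2 * (1 / \<gamma> (blk j) * ((z - x) $ j)^2) - 1/2 * (\<mu> (blk j) / real N * ((xs - x) $ j)^2) = R j" for j
  proof -
    have g: "\<gamma> (blk j) > 0" by (rule blk_facts)
    have "(z - uu x) $ j = (z - x) $ j + \<gamma> (blk j) * gr x $ j" by simp
    then show ?thesis unfolding R_def using g by (simp add: field_simps power2_eq_square)
  qed
  have br: "inner (gr x) (z - x) - inner (gr x) (xs - x) + inner (Dn (z - uu x)) (Dn (xs - z))
      + 1/2 * wnormsq Dinv (z - x) - 1/2 * wnormsq (\<lambda>j. \<mu> (blk j) / real N) (xs - x) = (\<Sum>j\<in>UNIV. R j)"
    unfolding pt[symmetric] unfolding Dn_inner unfolding inner_sum_vec wnormsq_def
    by (simp add: sum.distrib sum_subtractf sum_distrib_left)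
  have "(\<Sum>j\<in>UNIV. R j) \<le> (\<Sum>j\<in>UNIV. (1 - dl) / (2 * dl) * ((z - x)$j)^2 * (1 / \<gamma> (blk j)))"
  proof (rule sum_mono)
    fix j
    have g: "\<gamma> (blk j) > 0" by (rule blk_facts)
    have "dl \<le> \<gamma> (blk j) * \<mu> (blk j) / real N" using dl_le blk_range by blast
    then have m: "\<mu> (blk j) / real N \<ge> dl * (1 / \<gamma> (blk j))" using g by (simp add: field_simps)
    show "R j \<le> (1 - dl) / (2 * dl) * ((z - x)$j)^2 * (1 / \<gamma> (blk j))"
      unfolding R_def by (rule err_pt) (use g dl_pos m in auto)
  qed
  also have "\<dots> = (1 - dl) / (2 * dl) * (norm (Dn (z - x)))^2"
    unfolding Dn_norm wnormsq_def sum_distrib_left by (rule sum.cong) (simp_all add: ac_simps)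
  finally show ?thesis using fb sc vi br by linarith
qed

lemma step_dec:
  assumes z: "z \<in> TT x" and z': "z' \<in> TT x'"
    and upd: "\<forall>j. x' $ j = (if blk j \<in> S then z $ j else x $ j)"
  shows "FB x' \<le> FB x - (1 - Dl) / 2 * (norm (Dn (x' - x)))^2"
proof -
  have zD: "z \<in> domG" using TT_min[OF z] by simp
  have v1: "FB x' \<le> val x' z" using FB_eq[OF z'] TT_min(2)[OF z' zD] by simp
  define h where "h i = (if i \<in> S then L i / 2 else 0)" for i
  have blk: "f i x' + inner (df i x') (z - x') \<le> f i x + inner (df i x) (z - x) + h i * (norm (P i (z - x)))^2"
    if i: "i \<in> {1..N}" for i
  proof (cases "i \<in> S")
    case True
    have Px: "P i x' = P i z" using upd True by (simp add: vec_eq_iff)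
    have "f i x' = f i z" by (rule f_blk[OF i Px])
    moreover have "inner (df i x') (z - x') = 0"
      using inner_df_P1[OF i, of x' "z - x'"] Px by (simp add: P_diff)
    moreover have "f i z \<le> f i x + inner (df i x) (z - x) + L i / 2 * (norm (P i (z - x)))^2"
      by (rule descent[OF i])
    ultimately show ?thesis using True by (simp add: h_def)
  next
    case False
    have Px: "P i x' = P i x" using upd False by (simp add: vec_eq_iff)
    have "f i x' = f i x" by (rule f_blk[OF i Px])
    moreover have "df i x' = df i x" by (rule df_blk[OF i Px])
    moreover have "inner (df i x) (z - x') = inner (df i x) (z - x)"
      using inner_df_P1[OF i, of x "z - x'"] inner_df_P1[OF i, of x "z - x"] Px by (simp add: P_diff)
    ultimately show ?thesis using False by (simp add: h_def)
  qed
  have NN: "real N > 0" using N by simp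
  have Fpart: "Fsum N f x' + inner (gr x') (z - x') \<le> Fsum N f x + inner (gr x) (z - x) + (\<Sum>j\<in>UNIV. h (blk j) * ((z - x)$j)^2) / real N"
  proof -
    have "(\<Sum>i\<in>{1..N}. f i x' + inner (df i x') (z - x')) \<le> (\<Sum>i\<in>{1..N}. f i x + inner (df i x) (z - x) + h i * (norm (P i (z - x)))^2)"
      by (rule sum_mono) (rule blk)
    then have "(\<Sum>i\<in>{1..N}. f i x') + (\<Sum>i\<in>{1..N}. inner (df i x') (z - x')) \<le> (\<Sum>i\<in>{1..N}. f i x) + (\<Sum>i\<in>{1..N}. inner (df i x) (z - x)) + (\<Sum>j\<in>UNIV. h (blk j) * ((z - x)$j)^2)"
      by (simp only: sum.distrib block_sum)
    then have "((\<Sum>i\<in>{1..N}. f i x') + (\<Sum>i\<in>{1..N}. inner (df i x') (z - x'))) / real N \<le> ((\<Sum>i\<in>{1..N}. f i x) + (\<Sum>i\<in>{1..N}. inner (df i x) (z - x)) + (\<Sum>j\<in>UNIV. h (blk j) * ((z - x)$j)^2)) / real N"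
      using NN by (rule divide_right_mono[OF _ less_imp_le])
    then show ?thesis unfolding Fsum_sum inner_gr by (simp add: add_divide_distrib)
  qed
  define Q where "Q = (norm (Dn (x' - x)))^2"
  have Qs: "Q = (\<Sum>j\<in>UNIV. if blk j \<in> S then 1 / \<gamma> (blk j) * ((z - x)$j)^2 else 0)"
    unfolding Q_def Dn_norm wnormsq_def by (rule sum.cong) (auto simp: upd)
  have wsplit: "wnormsq Dinv (z - x) = wnormsq Dinv (z - x') + Q"
    unfolding Qs wnormsq_def sum.distrib[symmetric] by (rule sum.cong) (auto simp: upd)
  have hQ: "(\<Sum>j\<in>UNIV. h (blk j) * ((z - x)$j)^2) / real N \<le> Dl / 2 * Q"
  proof -
    have "(\<Sum>j\<in>UNIV. h (blk j) * ((z - x)$j)^2) / real N = (\<Sum>j\<in>UNIV. h (blk j) / real N * ((z - x)$j)^2)"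
      by (simp add: sum_divide_distrib)
    also have "\<dots> \<le> (\<Sum>j\<in>UNIV. Dl / 2 * (if blk j \<in> S then 1 / \<gamma> (blk j) * ((z - x)$j)^2 else 0))"
    proof (rule sum_mono)
      fix j
      have g: "\<gamma> (blk j) > 0" by (rule blk_facts)
      have "\<gamma> (blk j) * L (blk j) / real N \<le> Dl" using Dl_ge blk_range by blast
      then have "L (blk j) / real N \<le> Dl * (1 / \<gamma> (blk j))" using g by (simp add: field_simps)
      then have "L (blk j) / real N * (((z - x)$j)^2 / 2) \<le> Dl * (1 / \<gamma> (blk j)) * (((z - x)$j)^2 / 2)"
        by (rule mult_right_mono) simp
      moreover have "L (blk j) / 2 / real N * ((z - x)$j)^2 = L (blk j) / real N * (((z - x)$j)^2 / 2)" by simp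
      moreover have "Dl / 2 * (1 / \<gamma> (blk j) * ((z - x)$j)^2) = Dl * (1 / \<gamma> (blk j)) * (((z - x)$j)^2 / 2)" by simp
      ultimately have "L (blk j) / 2 / real N * ((z - x)$j)^2 \<le> Dl / 2 * (1 / \<gamma> (blk j) * ((z - x)$j)^2)"
        by metis
      then show "h (blk j) / real N * ((z - x)$j)^2 \<le> Dl / 2 * (if blk j \<in> S then 1 / \<gamma> (blk j) * ((z - x)$j)^2 else 0)"
      proof (cases "blk j \<in> S")
        case True
        then show ?thesis using \<open>L (blk j) / 2 / real N * ((z - x)$j)^2 \<le> Dl / 2 * (1 / \<gamma> (blk j) * ((z - x)$j)^2)\<close>
          by (simp only: h_def if_True)
      qed (simp add: h_def)
    qed
    also have "\<dots> = Dl / 2 * Q" unfolding Qs sum_distrib_left ..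
    finally show ?thesis .
  qed
  have fbx: "FB x = val x z" by (rule FB_eq[OF z])
  have e: "(1 - Dl) / 2 * Q = Q / 2 - Dl / 2 * Q" using alg1 .
  show ?thesis unfolding Q_def[symmetric] using v1 Fpart wsplit hQ fbx e by linarith
qed

end

locale BCseq = BC +
  fixes x z and I :: "nat \<Rightarrow> nat set"
  assumes z_T: "\<forall>k. z k \<in> Tmap N blk \<gamma> df domG G (x k)"
    and x_upd: "\<forall>k. \<forall>j. x (Suc k) $ j = (if blk j \<in> I (Suc k) then z k $ j else x k $ j)"
begin

lemma zT: "z k \<in> TT (x k)" using z_T by blast

lemma dstep_nth: "(x (Suc k) - x k) $ j = (if blk j \<in> I (Suc k) then (z k - x k) $ j else 0)"
  using x_upd by simp

lemma multi:
  "FB (x (k0 + t)) \<le> FB (x k0) - (1 - Dl) / 2 * (\<Sum>s<t. (norm (Dn (x (Suc (k0 + s)) - x (k0 + s))))^2)"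
proof (induction t)
  case 0 then show ?case by simp
next
  case (Suc t)
  have "FB (x (Suc (k0 + t))) \<le> FB (x (k0 + t)) - (1 - Dl) / 2 * (norm (Dn (x (Suc (k0 + t)) - x (k0 + t))))^2"
    by (rule step_dec[OF zT zT]) (use x_upd in blast)
  then show ?case using Suc.IH by (simp add: algebra_simps)
qed

lemma unchanged:
  "(\<forall>s<t. blk j \<notin> I (Suc (k0 + s))) \<Longrightarrow> x (k0 + t) $ j = x k0 $ j"
proof (induction t)
  case 0 then show ?case by simp
next
  case (Suc t)
  then have "x (Suc (k0 + t)) $ j = x (k0 + t) $ j" using x_upd by simp
  then show ?case using Suc by simp
qed

lemma telescope:
  "x (k0 + t) $ j - x k0 $ j = (\<Sum>s<t. (x (Suc (k0 + s)) - x (k0 + s)) $ j)"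
  by (induction t) simp_all

lemma sq_sum_le: "(\<Sum>s<t. (a s)::real)^2 \<le> real t * (\<Sum>s<t. (a s)^2)"
  using Cauchy_Schwarz_ineq_sum[of "\<lambda>s. 1" a "{..<t}"] by simp

lemma epoch:
  assumes cov: "\<forall>i\<in>{1..N}. \<exists>t<Pp. i \<in> I (Suc (k0 + t))"
    and B0: "B \<ge> 0"
    and hB: "\<forall>t\<le>Pp. \<forall>j. (x (k0 + t) $ j - x k0 $ j)^2 \<le> B * (\<Sum>s<Pp. ((x (Suc (k0 + s)) - x (k0 + s)) $ j)^2)"
  shows "FB (x (k0 + Pp)) - \<Phi> xs \<le> (1 - dl * (1 - Dl) / ((1 - dl) * (1 + sqrt (real Pp * B) * (1 - dl))^2)) * (FB (x k0) - \<Phi> xs)"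
proof -
  define d where "d s = x (Suc (k0 + s)) - x (k0 + s)" for s
  define E2 where "E2 = (\<Sum>s<Pp. (norm (Dn (d s)))^2)"
  have dec: "FB (x (k0 + Pp)) \<le> FB (x k0) - (1 - Dl) / 2 * E2"
    using multi[of k0 Pp] unfolding E2_def d_def .
  have E2_eq: "E2 = (\<Sum>j\<in>UNIV. \<Sum>s<Pp. ((d s) $ j)^2 / \<gamma> (blk j))"
    unfolding E2_def Dn_norm wnormsq_def by (subst sum.swap) simp
  have E0: "E2 \<ge> 0" unfolding E2_def by (intro sum_nonneg) simp
  define tj where "tj j = (LEAST t. blk j \<in> I (Suc (k0 + t)))" for j
  have tj: "tj j < Pp \<and> blk j \<in> I (Suc (k0 + tj j)) \<and> (\<forall>s<tj j. blk j \<notin> I (Suc (k0 + s)))" for j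
  proof -
    obtain t where t: "t < Pp" "blk j \<in> I (Suc (k0 + t))" using cov blk_range by blast
    have m: "blk j \<in> I (Suc (k0 + tj j))" unfolding tj_def by (rule LeastI[of _ t]) (rule t(2))
    have le: "tj j \<le> t" unfolding tj_def by (rule Least_le) (rule t(2))
    have "\<forall>s<tj j. blk j \<notin> I (Suc (k0 + s))" unfolding tj_def using not_less_Least by blast
    then show ?thesis using m le t(1) by simp
  qed
  have xj: "x (k0 + tj j) $ j = x k0 $ j" for j using unchanged tj by blast
  define a where "a = (\<chi> j. (d (tj j)) $ j)"
  define b where "b = (\<chi> j. (z k0 - z (k0 + tj j)) $ j)"
  have zx: "z k0 - x k0 = a + b"
  proof -
    have "(d (tj j)) $ j = z (k0 + tj j) $ j - x k0 $ j" for j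
      unfolding d_def using dstep_nth[of "k0 + tj j" j] tj[of j] xj[of j] by simp
    then show ?thesis unfolding a_def b_def by (simp add: vec_eq_iff)
  qed
  have na: "(norm (Dn a))^2 \<le> E2"
  proof -
    have "(norm (Dn a))^2 = (\<Sum>j\<in>UNIV. ((d (tj j)) $ j)^2 / \<gamma> (blk j))"
      unfolding Dn_norm wnormsq_def a_def by simp
    also have "\<dots> \<le> (\<Sum>j\<in>UNIV. \<Sum>s<Pp. ((d s) $ j)^2 / \<gamma> (blk j))"
    proof (rule sum_mono)
      fix j
      show "((d (tj j)) $ j)^2 / \<gamma> (blk j) \<le> (\<Sum>s<Pp. ((d s) $ j)^2 / \<gamma> (blk j))"
        using tj[of j] blk_facts(1)[of j]
        by (intro member_le_sum[where f = "\<lambda>s. ((d s) $ j)^2 / \<gamma> (blk j)"]) auto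
    qed
    finally show ?thesis unfolding E2_eq .
  qed
  have nx: "(norm (Dn (x k0 - x (k0 + s))))^2 \<le> B * E2" if s: "s < Pp" for s
  proof -
    have "(norm (Dn (x k0 - x (k0 + s))))^2 = (\<Sum>j\<in>UNIV. (x (k0 + s) $ j - x k0 $ j)^2 / \<gamma> (blk j))"
      unfolding Dn_norm wnormsq_def by (simp add: power2_commute)
    also have "\<dots> \<le> (\<Sum>j\<in>UNIV. B * (\<Sum>s<Pp. ((d s) $ j)^2 / \<gamma> (blk j)))"
    proof (rule sum_mono)
      fix j
      have g: "\<gamma> (blk j) > 0" by (rule blk_facts)
      have "(x (k0 + s) $ j - x k0 $ j)^2 \<le> B * (\<Sum>s<Pp. ((d s) $ j)^2)"
        using hB s unfolding d_def by simp
      then have "(x (k0 + s) $ j - x k0 $ j)^2 / \<gamma> (blk j) \<le> B * (\<Sum>s<Pp. ((d s) $ j)^2) / \<gamma> (blk j)"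
        using g by (intro divide_right_mono) auto
      then show "(x (k0 + s) $ j - x k0 $ j)^2 / \<gamma> (blk j) \<le> B * (\<Sum>s<Pp. ((d s) $ j)^2 / \<gamma> (blk j))"
        by (simp only: sum_divide_distrib[symmetric] times_divide_eq_right)
    qed
    also have "\<dots> = B * E2" unfolding E2_eq sum_distrib_left ..
    finally show ?thesis .
  qed
  have nb: "(norm (Dn b))^2 \<le> real Pp * ((1 - dl)^2 * (B * E2))"
  proof -
    have "(norm (Dn b))^2 = (\<Sum>j\<in>UNIV. ((z k0 - z (k0 + tj j)) $ j)^2 / \<gamma> (blk j))"
      unfolding Dn_norm wnormsq_def b_def by simp
    also have "\<dots> \<le> (\<Sum>j\<in>UNIV. \<Sum>s<Pp. ((z k0 - z (k0 + s)) $ j)^2 / \<gamma> (blk j))"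
    proof (rule sum_mono)
      fix j
      show "((z k0 - z (k0 + tj j)) $ j)^2 / \<gamma> (blk j) \<le> (\<Sum>s<Pp. ((z k0 - z (k0 + s)) $ j)^2 / \<gamma> (blk j))"
        using tj[of j] blk_facts(1)[of j]
        by (intro member_le_sum[where f = "\<lambda>s. ((z k0 - z (k0 + s)) $ j)^2 / \<gamma> (blk j)"]) auto
    qed
    also have "\<dots> = (\<Sum>s<Pp. (norm (Dn (z k0 - z (k0 + s))))^2)"
      unfolding Dn_norm wnormsq_def by (subst sum.swap) simp
    also have "\<dots> \<le> (\<Sum>s<Pp. (1 - dl)^2 * (B * E2))"
    proof (rule sum_mono)
      fix s assume s: "s \<in> {..<Pp}"
      have "(norm (Dn (z k0 - z (k0 + s))))^2 \<le> (1 - dl)^2 * (norm (Dn (x k0 - x (k0 + s))))^2"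
        by (rule T_contr[OF zT zT])
      also have "\<dots> \<le> (1 - dl)^2 * (B * E2)" using nx s by (intro mult_left_mono) auto
      finally show "(norm (Dn (z k0 - z (k0 + s))))^2 \<le> (1 - dl)^2 * (B * E2)" .
    qed
    also have "\<dots> = real Pp * ((1 - dl)^2 * (B * E2))" by simp
    finally show ?thesis .
  qed
  define \<rho> where "\<rho> = sqrt (real Pp * B) * (1 - dl)"
  have dl1: "0 < 1 - dl" using dl_lt1 by simp
  have \<rho>0: "\<rho> \<ge> 0" unfolding \<rho>_def using dl1 B0 by simp
  have nb': "norm (Dn b) \<le> \<rho> * sqrt E2"
  proof -
    have "norm (Dn b) = sqrt ((norm (Dn b))^2)" by simp
    also have "\<dots> \<le> sqrt (real Pp * ((1 - dl)^2 * (B * E2)))" using nb by (rule real_sqrt_le_mono)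
    also have "\<dots> = \<rho> * sqrt E2" unfolding \<rho>_def using dl1
      by (simp add: real_sqrt_mult algebra_simps)
    finally show ?thesis .
  qed
  have na': "norm (Dn a) \<le> sqrt E2"
    using real_sqrt_le_mono[OF na] by simp
  have "norm (Dn (z k0 - x k0)) \<le> (1 + \<rho>) * sqrt E2"
  proof -
    have "norm (Dn (z k0 - x k0)) \<le> norm (Dn a) + norm (Dn b)"
      unfolding zx Dn_add by (rule norm_triangle_ineq)
    then show ?thesis using na' nb' by (simp add: algebra_simps)
  qed
  then have "(norm (Dn (z k0 - x k0)))^2 \<le> ((1 + \<rho>) * sqrt E2)^2"
    by (intro power_mono) auto
  also have "\<dots> = (1 + \<rho>)^2 * E2" using E0 by (simp add: power_mult_distrib)
  finally have nzx: "(norm (Dn (z k0 - x k0)))^2 \<le> (1 + \<rho>)^2 * E2" .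
  define D0 where "D0 = FB (x k0) - \<Phi> xs"
  define K where "K = (1 - dl) / (2 * dl) * (1 + \<rho>)^2"
  have Kpos: "K > 0" unfolding K_def using dl_pos dl1 \<rho>0 by simp
  have "D0 \<le> (1 - dl) / (2 * dl) * (norm (Dn (z k0 - x k0)))^2"
    unfolding D0_def by (rule err_bound[OF zT])
  also have "\<dots> \<le> (1 - dl) / (2 * dl) * ((1 + \<rho>)^2 * E2)"
    using dl_pos dl1 by (intro mult_left_mono[OF nzx]) simp
  also have "\<dots> = K * E2" unfolding K_def by (simp only: mult.assoc)
  finally have "D0 / K \<le> E2" using Kpos by (simp add: divide_le_eq mult.commute)
  then have m1: "(1 - Dl) / 2 * (D0 / K) \<le> (1 - Dl) / 2 * E2"
    using Dl_lt1 by (intro mult_left_mono) auto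
  have eqc: "dl * (1 - Dl) / ((1 - dl) * (1 + \<rho>)^2) * D0 = (1 - Dl) / 2 * (D0 / K)"
    unfolding K_def using dl_pos dl1 \<rho>0 by (simp add: field_simps)
  define c0 where "c0 = dl * (1 - Dl) / ((1 - dl) * (1 + \<rho>)^2)"
  define W where "W = (1 - Dl) / 2 * E2"
  define Y where "Y = (1 - Dl) / 2 * (D0 / K)"
  have f1: "(1 - c0) * D0 = D0 - c0 * D0" by (simp add: algebra_simps)
  have f2: "c0 * D0 = Y" unfolding c0_def Y_def using eqc .
  have f3: "Y \<le> W" unfolding Y_def W_def using m1 .
  have f4: "FB (x (k0 + Pp)) \<le> FB (x k0) - W" unfolding W_def using dec .
  have "FB (x (k0 + Pp)) - \<Phi> xs \<le> (1 - c0) * D0" using f1 f2 f3 f4 unfolding D0_def by linarith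
  then show ?thesis unfolding c0_def D0_def \<rho>_def .
qed


lemma rates:
  assumes c1: "c \<le> 1"
    and ep: "\<forall>\<nu>. FB (x (Pp * (\<nu> + 1))) - \<Phi> xs \<le> (1 - c) * (FB (x (Pp * \<nu>)) - \<Phi> xs)"
  shows "\<forall>\<nu>::nat. FB (x (Pp * (\<nu> + 1))) - \<Phi> xs \<le> (1 - c) * (FB (x (Pp * \<nu>)) - \<Phi> xs)
          \<and> (x 0 \<in> domG \<longrightarrow> \<Phi> (z (Pp * \<nu>)) - \<Phi> xs \<le> (\<Phi> (x 0) - \<Phi> xs) * (1 - c) ^ \<nu>)
          \<and> (x 0 \<in> domG \<longrightarrow> 1/2 * wnormsq (\<lambda>j. \<mu> (blk j) / real N) (z (Pp * \<nu>) - xs)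
                                \<le> (\<Phi> (x 0) - \<Phi> xs) * (1 - c) ^ \<nu>)"
proof
  fix \<nu> :: nat
  have c0: "0 \<le> 1 - c" using c1 by simp
  have ind: "FB (x (Pp * n)) - \<Phi> xs \<le> (1 - c) ^ n * (FB (x 0) - \<Phi> xs)" for n
  proof (induction n)
    case 0 then show ?case by simp
  next
    case (Suc n)
    have "FB (x (Pp * (n + 1))) - \<Phi> xs \<le> (1 - c) * (FB (x (Pp * n)) - \<Phi> xs)" using ep by blast
    also have "\<dots> \<le> (1 - c) * ((1 - c) ^ n * (FB (x 0) - \<Phi> xs))" using Suc.IH c0 by (rule mult_left_mono)
    finally show ?case by simp
  qed
  have pw: "0 \<le> (1 - c) ^ \<nu>" using c0 by simp
  have A: "\<Phi> (z (Pp * \<nu>)) - \<Phi> xs \<le> (\<Phi> (x 0) - \<Phi> xs) * (1 - c) ^ \<nu>" if x0: "x 0 \<in> domG"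
  proof -
    have "\<Phi> (z (Pp * \<nu>)) \<le> FB (x (Pp * \<nu>))" by (rule FB_ge_Phi[OF zT])
    moreover have "FB (x 0) \<le> \<Phi> (x 0)" by (rule FB_le_Phi[OF zT x0])
    then have "(1 - c) ^ \<nu> * (FB (x 0) - \<Phi> xs) \<le> (1 - c) ^ \<nu> * (\<Phi> (x 0) - \<Phi> xs)"
      using pw by (intro mult_left_mono) auto
    ultimately show ?thesis using ind[of \<nu>] by (simp add: mult.commute)
  qed
  have B: "1/2 * wnormsq (\<lambda>j. \<mu> (blk j) / real N) (z (Pp * \<nu>) - xs) \<le> (\<Phi> (x 0) - \<Phi> xs) * (1 - c) ^ \<nu>"
    if x0: "x 0 \<in> domG"
    using third[OF TT_min(1)[OF zT[of "Pp * \<nu>"]]] A[OF x0] by linarith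
  show "FB (x (Pp * (\<nu> + 1))) - \<Phi> xs \<le> (1 - c) * (FB (x (Pp * \<nu>)) - \<Phi> xs)
          \<and> (x 0 \<in> domG \<longrightarrow> \<Phi> (z (Pp * \<nu>)) - \<Phi> xs \<le> (\<Phi> (x 0) - \<Phi> xs) * (1 - c) ^ \<nu>)
          \<and> (x 0 \<in> domG \<longrightarrow> 1/2 * wnormsq (\<lambda>j. \<mu> (blk j) / real N) (z (Pp * \<nu>) - xs)
                                \<le> (\<Phi> (x 0) - \<Phi> xs) * (1 - c) ^ \<nu>)"
    using ep A B by blast
qed

lemma c0_le1:
  assumes "\<rho> \<ge> 0"
  shows "dl * (1 - Dl) / ((1 - dl) * (1 + \<rho>)^2) \<le> 1"
proof -
  have d1: "0 < 1 - dl" using dl_lt1 by simp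
  have "1 * 1 \<le> (1 + \<rho>) * (1 + \<rho>)" by (rule mult_mono) (use assms in auto)
  then have "1 \<le> (1 + \<rho>)^2" by (simp add: power2_eq_square)
  then have "(1 - dl) * 1 \<le> (1 - dl) * (1 + \<rho>)^2" using d1 by (intro mult_left_mono) auto
  moreover have "dl * (1 - Dl) \<le> 1 - dl"
  proof -
    have "dl * (1 - Dl) \<le> 1 * (1 - Dl)" using dl_lt1 Dl_lt1 by (intro mult_right_mono) auto
    also have "\<dots> \<le> 1 - dl" using dl_le_Dl by simp
    finally show ?thesis .
  qed
  ultimately have "dl * (1 - Dl) \<le> (1 - dl) * (1 + \<rho>)^2" by simp
  moreover have "0 < (1 - dl) * (1 + \<rho>)^2" using d1 assms by simp
  ultimately show ?thesis by simp
qed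

lemma finish:
  assumes cc: "c \<le> c0" and c01: "c0 \<le> 1"
    and ep0: "\<forall>\<nu>. FB (x (Pp * (\<nu> + 1))) - \<Phi> xs \<le> (1 - c0) * (FB (x (Pp * \<nu>)) - \<Phi> xs)"
  shows "\<forall>\<nu>::nat. FB (x (Pp * (\<nu> + 1))) - \<Phi> xs \<le> (1 - c) * (FB (x (Pp * \<nu>)) - \<Phi> xs)
          \<and> (x 0 \<in> domG \<longrightarrow> \<Phi> (z (Pp * \<nu>)) - \<Phi> xs \<le> (\<Phi> (x 0) - \<Phi> xs) * (1 - c) ^ \<nu>)
          \<and> (x 0 \<in> domG \<longrightarrow> 1/2 * wnormsq (\<lambda>j. \<mu> (blk j) / real N) (z (Pp * \<nu>) - xs)
                                \<le> (\<Phi> (x 0) - \<Phi> xs) * (1 - c) ^ \<nu>)"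
proof (rule rates)
  show "c \<le> 1" using cc c01 by simp
  show "\<forall>\<nu>. FB (x (Pp * (\<nu> + 1))) - \<Phi> xs \<le> (1 - c) * (FB (x (Pp * \<nu>)) - \<Phi> xs)"
  proof
    fix \<nu>
    have D: "0 \<le> FB (x (Pp * \<nu>)) - \<Phi> xs" using m_le_FB[OF zT] by simp
    have "(1 - c0) * (FB (x (Pp * \<nu>)) - \<Phi> xs) \<le> (1 - c) * (FB (x (Pp * \<nu>)) - \<Phi> xs)"
      using cc D by (intro mult_right_mono) auto
    then show "FB (x (Pp * (\<nu> + 1))) - \<Phi> xs \<le> (1 - c) * (FB (x (Pp * \<nu>)) - \<Phi> xs)"
      using ep0 by (meson order_trans)
  qed
qed

lemma ess_case:
  assumes T1: "T \<ge> 1" and ess: "ess_cyclic N I T"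
  shows "\<forall>\<nu>::nat. FB (x (T * (\<nu> + 1))) - \<Phi> xs \<le> (1 - dl * (1 - Dl) / (real N * (1 + real T * (1 - dl))^2 * (1 - dl))) * (FB (x (T * \<nu>)) - \<Phi> xs)
          \<and> (x 0 \<in> domG \<longrightarrow> \<Phi> (z (T * \<nu>)) - \<Phi> xs \<le> (\<Phi> (x 0) - \<Phi> xs) * (1 - dl * (1 - Dl) / (real N * (1 + real T * (1 - dl))^2 * (1 - dl))) ^ \<nu>)
          \<and> (x 0 \<in> domG \<longrightarrow> 1/2 * wnormsq (\<lambda>j. \<mu> (blk j) / real N) (z (T * \<nu>) - xs)
                                \<le> (\<Phi> (x 0) - \<Phi> xs) * (1 - dl * (1 - Dl) / (real N * (1 + real T * (1 - dl))^2 * (1 - dl))) ^ \<nu>)"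
proof (rule finish)
  define c0 where "c0 = dl * (1 - Dl) / ((1 - dl) * (1 + sqrt (real T * real T) * (1 - dl))^2)"
  have sq: "sqrt (real T * real T) = real T" by simp
  have d1: "0 < 1 - dl" using dl_lt1 by simp
  show "c0 \<le> 1" unfolding c0_def by (rule c0_le1) (use d1 in \<open>intro mult_nonneg_nonneg; simp\<close>)
  show "dl * (1 - Dl) / (real N * (1 + real T * (1 - dl))^2 * (1 - dl)) \<le> c0"
    unfolding c0_def sq
  proof (rule divide_left_mono)
    have "0 \<le> real T * (1 - dl)" using d1 by (intro mult_nonneg_nonneg) auto
    then have "0 < 1 + real T * (1 - dl)" by linarith
    then have Q: "0 < (1 + real T * (1 - dl))^2" by simp
    have "(1 - dl) * (1 + real T * (1 - dl))^2 * 1 \<le> (1 - dl) * (1 + real T * (1 - dl))^2 * real N"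
      using N d1 Q by (intro mult_left_mono) auto
    then show "(1 - dl) * (1 + real T * (1 - dl))^2 \<le> real N * (1 + real T * (1 - dl))^2 * (1 - dl)"
      by (simp add: algebra_simps)
    show "0 \<le> dl * (1 - Dl)" using dl_pos Dl_lt1 by simp
    show "0 < real N * (1 + real T * (1 - dl))^2 * (1 - dl) * ((1 - dl) * (1 + real T * (1 - dl))^2)"
      using N d1 Q by simp
  qed
  show "\<forall>\<nu>. FB (x (T * (\<nu> + 1))) - \<Phi> xs \<le> (1 - c0) * (FB (x (T * \<nu>)) - \<Phi> xs)"
  proof
    fix \<nu> :: nat
    define k0 where "k0 = T * \<nu>"
    have k: "T * (\<nu> + 1) = k0 + T" unfolding k0_def by (simp add: algebra_simps)
    have cov: "\<forall>i\<in>{1..N}. \<exists>t<T. i \<in> I (Suc (k0 + t))"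
    proof
      fix i assume i: "i \<in> {1..N}"
      obtain t where t: "t \<in> {1..T}" "i \<in> I (k0 + t)" using ess i unfolding ess_cyclic_def by blast
      then have "t - 1 < T" "Suc (k0 + (t - 1)) = k0 + t" by auto
      then show "\<exists>t<T. i \<in> I (Suc (k0 + t))" using t by metis
    qed
    have hB: "\<forall>t\<le>T. \<forall>j. (x (k0 + t) $ j - x k0 $ j)^2 \<le> real T * (\<Sum>s<T. ((x (Suc (k0 + s)) - x (k0 + s)) $ j)^2)"
    proof (intro allI impI)
      fix t j assume t: "t \<le> T"
      have "(x (k0 + t) $ j - x k0 $ j)^2 = (\<Sum>s<t. (x (Suc (k0 + s)) - x (k0 + s)) $ j)^2"
        by (simp only: telescope)
      also have "\<dots> \<le> real t * (\<Sum>s<t. ((x (Suc (k0 + s)) - x (k0 + s)) $ j)^2)" by (rule sq_sum_le)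
      also have "\<dots> \<le> real T * (\<Sum>s<T. ((x (Suc (k0 + s)) - x (k0 + s)) $ j)^2)"
      proof (rule mult_mono)
        show "(\<Sum>s<t. ((x (Suc (k0 + s)) - x (k0 + s)) $ j)^2) \<le> (\<Sum>s<T. ((x (Suc (k0 + s)) - x (k0 + s)) $ j)^2)"
          using t by (intro sum_mono2) auto
      qed (use t in \<open>auto intro: sum_nonneg\<close>)
      finally show "(x (k0 + t) $ j - x k0 $ j)^2 \<le> real T * (\<Sum>s<T. ((x (Suc (k0 + s)) - x (k0 + s)) $ j)^2)" .
    qed
    have "FB (x (k0 + T)) - \<Phi> xs \<le> (1 - dl * (1 - Dl) / ((1 - dl) * (1 + sqrt (real T * real T) * (1 - dl))^2)) * (FB (x k0) - \<Phi> xs)"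
      by (rule epoch[OF cov _ hB]) simp
    then show "FB (x (T * (\<nu> + 1))) - \<Phi> xs \<le> (1 - c0) * (FB (x (T * \<nu>)) - \<Phi> xs)"
      unfolding k c0_def k0_def .
  qed
qed

lemma shuf_case:
  assumes sh: "shuffled_cyclic N I"
  shows "\<forall>\<nu>::nat. FB (x (N * (\<nu> + 1))) - \<Phi> xs \<le> (1 - dl * (1 - Dl) / (real N * (2 - dl)^2 * (1 - dl))) * (FB (x (N * \<nu>)) - \<Phi> xs)
          \<and> (x 0 \<in> domG \<longrightarrow> \<Phi> (z (N * \<nu>)) - \<Phi> xs \<le> (\<Phi> (x 0) - \<Phi> xs) * (1 - dl * (1 - Dl) / (real N * (2 - dl)^2 * (1 - dl))) ^ \<nu>)
          \<and> (x 0 \<in> domG \<longrightarrow> 1/2 * wnormsq (\<lambda>j. \<mu> (blk j) / real N) (z (N * \<nu>) - xs)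
                                \<le> (\<Phi> (x 0) - \<Phi> xs) * (1 - dl * (1 - Dl) / (real N * (2 - dl)^2 * (1 - dl))) ^ \<nu>)"
proof (rule finish)
  obtain \<pi> :: "nat \<Rightarrow> nat \<Rightarrow> nat" where perm: "\<forall>m. \<pi> m permutes {1..N}"
    and Ieq: "\<forall>k. I (Suc k) = {\<pi> (k div N) (k mod N + 1)}"
    using sh unfolding shuffled_cyclic_def by blast
  define c0 where "c0 = dl * (1 - Dl) / ((1 - dl) * (1 + sqrt (real N * 1) * (1 - dl))^2)"
  have d1: "0 < 1 - dl" using dl_lt1 by simp
  have N0: "real N \<ge> 1" using N by simp
  show "c0 \<le> 1" unfolding c0_def by (rule c0_le1) (use d1 in \<open>intro mult_nonneg_nonneg; simp\<close>)
  show "dl * (1 - Dl) / (real N * (2 - dl)^2 * (1 - dl)) \<le> c0"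
    unfolding c0_def
  proof (rule divide_left_mono)
    have sN: "1 \<le> sqrt (real N)" using N0 by simp
    have "1 + sqrt (real N * 1) * (1 - dl) \<le> sqrt (real N) * (2 - dl)"
      using sN by (simp add: algebra_simps)
    then have "(1 + sqrt (real N * 1) * (1 - dl))^2 \<le> (sqrt (real N) * (2 - dl))^2"
      using d1 by (intro power_mono) auto
    also have "\<dots> = real N * (2 - dl)^2" by (simp add: power_mult_distrib)
    finally have "(1 - dl) * (1 + sqrt (real N * 1) * (1 - dl))^2 \<le> (1 - dl) * (real N * (2 - dl)^2)"
      using d1 by (intro mult_left_mono) auto
    then show "(1 - dl) * (1 + sqrt (real N * 1) * (1 - dl))^2 \<le> real N * (2 - dl)^2 * (1 - dl)"
      by (simp add: algebra_simps)
    show "0 \<le> dl * (1 - Dl)" using dl_pos Dl_lt1 by simp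
    have "0 \<le> sqrt (real N * 1) * (1 - dl)" using d1 by (intro mult_nonneg_nonneg) auto
    then have "0 < 1 + sqrt (real N * 1) * (1 - dl)" by linarith
    then have "0 < (1 + sqrt (real N * 1) * (1 - dl))^2" by simp
    moreover have "0 < (2 - dl)^2" using d1 by simp
    ultimately show "0 < real N * (2 - dl)^2 * (1 - dl) * ((1 - dl) * (1 + sqrt (real N * 1) * (1 - dl))^2)"
      using N0 d1 by simp
  qed
  show "\<forall>\<nu>. FB (x (N * (\<nu> + 1))) - \<Phi> xs \<le> (1 - c0) * (FB (x (N * \<nu>)) - \<Phi> xs)"
  proof
    fix \<nu> :: nat
    define k0 where "k0 = N * \<nu>"
    have k: "N * (\<nu> + 1) = k0 + N" unfolding k0_def by (simp add: algebra_simps)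
    have Is: "I (Suc (k0 + s)) = {\<pi> \<nu> (s + 1)}" if s: "s < N" for s
    proof -
      have "(k0 + s) div N = \<nu>" "(k0 + s) mod N = s" unfolding k0_def using s by auto
      then show ?thesis using Ieq by simp
    qed
    have cov: "\<forall>i\<in>{1..N}. \<exists>t<N. i \<in> I (Suc (k0 + t))"
    proof
      fix i assume i: "i \<in> {1..N}"
      have "i \<in> \<pi> \<nu> ` {1..N}" using permutes_image[OF perm[rule_format, of \<nu>]] i by simp
      then obtain t' where t': "t' \<in> {1..N}" "i = \<pi> \<nu> t'" by blast
      then have tt: "t' - 1 < N" "t' - 1 + 1 = t'" by auto
      have "I (Suc (k0 + (t' - 1))) = {\<pi> \<nu> t'}" using Is[OF tt(1)] tt(2) by simp
      then have "i \<in> I (Suc (k0 + (t' - 1)))" using t'(2) by simp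
      then show "\<exists>t<N. i \<in> I (Suc (k0 + t))" using tt(1) by blast
    qed
    define d where "d s = x (Suc (k0 + s)) - x (k0 + s)" for s
    have uniq: "s1 = s2" if "s1 < N" "s2 < N" "d s1 $ j \<noteq> 0" "d s2 $ j \<noteq> 0" for s1 s2 j
    proof -
      have "blk j \<in> I (Suc (k0 + s1))" "blk j \<in> I (Suc (k0 + s2))"
        using that dstep_nth unfolding d_def by (metis)+
      then have "\<pi> \<nu> (s1 + 1) = \<pi> \<nu> (s2 + 1)" using Is that by auto
      then show ?thesis using permutes_inj[OF perm[rule_format, of \<nu>]] by (simp add: inj_eq)
    qed
    have hB: "\<forall>t\<le>N. \<forall>j. (x (k0 + t) $ j - x k0 $ j)^2 \<le> 1 * (\<Sum>s<N. ((x (Suc (k0 + s)) - x (k0 + s)) $ j)^2)"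
    proof (intro allI impI)
      fix t j assume t: "t \<le> N"
      have tele: "x (k0 + t) $ j - x k0 $ j = (\<Sum>s<t. d s $ j)" unfolding d_def by (rule telescope)
      show "(x (k0 + t) $ j - x k0 $ j)^2 \<le> 1 * (\<Sum>s<N. ((x (Suc (k0 + s)) - x (k0 + s)) $ j)^2)"
      proof (cases "\<exists>s0<t. d s0 $ j \<noteq> 0")
        case True
        then obtain s0 where s0: "s0 < t" "d s0 $ j \<noteq> 0" by blast
        have "(\<Sum>s<t. d s $ j) = d s0 $ j + (\<Sum>s\<in>{..<t} - {s0}. d s $ j)"
          using s0 by (intro sum.remove) auto
        also have "(\<Sum>s\<in>{..<t} - {s0}. d s $ j) = 0"
        proof (rule sum.neutral, intro ballI)
          fix s assume s: "s \<in> {..<t} - {s0}"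
          show "d s $ j = 0"
          proof (rule ccontr)
            assume "d s $ j \<noteq> 0"
            then have "s = s0" using uniq[of s s0 j] s s0 t by auto
            then show False using s by simp
          qed
        qed
        finally have "(x (k0 + t) $ j - x k0 $ j)^2 = (d s0 $ j)^2" using tele by simp
        also have "\<dots> \<le> (\<Sum>s<N. (d s $ j)^2)"
          using s0 t by (intro member_le_sum[where f = "\<lambda>s. (d s $ j)^2"]) auto
        finally show ?thesis unfolding d_def by simp
      next
        case False
        then have "(\<Sum>s<t. d s $ j) = 0" by (intro sum.neutral) auto
        then show ?thesis using tele by (simp add: sum_nonneg)
      qed
    qed
    have "FB (x (k0 + N)) - \<Phi> xs \<le> (1 - dl * (1 - Dl) / ((1 - dl) * (1 + sqrt (real N * 1) * (1 - dl))^2)) * (FB (x k0) - \<Phi> xs)"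
      by (rule epoch[OF cov _ hB]) simp
    then show "FB (x (N * (\<nu> + 1))) - \<Phi> xs \<le> (1 - c0) * (FB (x (N * \<nu>)) - \<Phi> xs)"
      unfolding k c0_def k0_def .
  qed
qed

end


theorem theorem2p9:
  fixes N :: nat
    and blk :: "'n::finite \<Rightarrow> nat"
    and f :: "nat \<Rightarrow> real^'n \<Rightarrow> real" and df :: "nat \<Rightarrow> real^'n \<Rightarrow> real^'n"
    and L \<mu> \<gamma> :: "nat \<Rightarrow> real"
    and domG :: "(real^'n) set" and G :: "real^'n \<Rightarrow> real"
    and x z :: "nat \<Rightarrow> real^'n" and I :: "nat \<Rightarrow> nat set"
    and xs :: "real^'n"
  assumes N: "N \<ge> 1"
    and blk_range: "\<forall>j. blk j \<in> {1..N}"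
    and blk_nonempty: "\<forall>i\<in>{1..N}. \<exists>j. blk j = i"
    and f_block: "\<forall>i\<in>{1..N}. \<forall>u v. blkproj blk i u = blkproj blk i v \<longrightarrow> f i u = f i v"
    and f_diff: "\<forall>i\<in>{1..N}. \<forall>u. (f i has_derivative (\<lambda>h. inner (df i u) h)) (at u)"
    and L_pos: "\<forall>i\<in>{1..N}. L i > 0"
    and f_lip: "\<forall>i\<in>{1..N}. \<forall>u v. norm (df i u - df i v) \<le> L i * norm (blkproj blk i (u - v))"
    and \<gamma>_range: "\<forall>i\<in>{1..N}. 0 < \<gamma> i \<and> \<gamma> i < real N / L i"
    and \<mu>_pos: "\<forall>i\<in>{1..N}. \<mu> i > 0"
    and f_strong: "\<forall>i\<in>{1..N}. convex_on UNIV (\<lambda>u. f i u - \<mu> i / 2 * (norm (blkproj blk i u))^2)"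
    and G_proper: "domG \<noteq> {}"
    and G_lsc: "lsc_dom domG G"
    and G_convex: "convex domG" "convex_on domG G"
    and xs_min: "xs \<in> domG" "\<forall>y\<in>domG. Fsum N f xs + G xs \<le> Fsum N f y + G y"
    and z_T: "\<forall>k. z k \<in> Tmap N blk \<gamma> df domG G (x k)"
    and I_sub: "\<forall>k. I (Suc k) \<subseteq> {1..N}"
    and x_upd: "\<forall>k. \<forall>j. x (Suc k) $ j = (if blk j \<in> I (Suc k) then z k $ j else x k $ j)"
  shows
   "let \<Phi> = (\<lambda>u. Fsum N f u + G u);
        m = \<Phi> xs;
        FB = FBE N blk \<gamma> f df domG G;
        \<delta> = Min ((\<lambda>i. \<gamma> i * \<mu> i / real N) ` {1..N});
        \<Delta> = Max ((\<lambda>i. \<gamma> i * L i / real N) ` {1..N});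
        rates = (\<lambda>(P::nat) (c::real). \<forall>\<nu>::nat.
            FB (x (P * (\<nu> + 1))) - m \<le> (1 - c) * (FB (x (P * \<nu>)) - m)
          \<and> (x 0 \<in> domG \<longrightarrow> \<Phi> (z (P * \<nu>)) - m \<le> (\<Phi> (x 0) - m) * (1 - c) ^ \<nu>)
          \<and> (x 0 \<in> domG \<longrightarrow> 1/2 * wnormsq (\<lambda>j. \<mu> (blk j) / real N) (z (P * \<nu>) - xs)
                                \<le> (\<Phi> (x 0) - m) * (1 - c) ^ \<nu>))
    in (\<forall>T::nat. T \<ge> 1 \<longrightarrow> ess_cyclic N I T \<longrightarrow>
          rates T (\<delta> * (1 - \<Delta>) / (real N * (1 + real T * (1 - \<delta>))^2 * (1 - \<delta>))))
     \<and> (shuffled_cyclic N I \<longrightarrow>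
          rates N (\<delta> * (1 - \<Delta>) / (real N * (2 - \<delta>)^2 * (1 - \<delta>))))"
proof -
  interpret BCseq N blk f df L \<mu> \<gamma> domG G xs x z I
    unfolding BCseq_def BC_def BCseq_axioms_def
    by (intro conjI; fact)
  have dleq: "Min ((\<lambda>i. \<gamma> i * \<mu> i / real N) ` {1..N}) = dl" by (simp add: dl_def)
  have Dleq: "Max ((\<lambda>i. \<gamma> i * L i / real N) ` {1..N}) = Dl" by (simp add: Dl_def)
  show ?thesis
    unfolding Let_def dleq Dleq
    using ess_case shuf_case by blast
qed

end
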